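(* Let $1<S\le N$, $L$ a band-width vector, $\dot W$ an $L$-admissible matrix, $W_\varepsilon=\mathrm{Id}+\varepsilon\dot W$, $k\in\mathbb N$, $\beta\in\Gamma$, $D_\beta=D_{k,\beta,L}$, $P_{\varepsilon,\beta}=D_\beta W_\varepsilon$ and $\hat P_\beta=D_\beta\hat W_L$. Let $\gamma>0$ be such that $P_{\varepsilon,\beta}$ has $N$ distinct eigenvalues for $0<\varepsilon<\gamma$, and for such $\varepsilon$ let $f^{(1)}_\varepsilon,\dots,f^{(N)}_\varepsilon$ be a unit-norm eigenbasis of $P_{\varepsilon,\beta}$ with eigenvalues $\lambda^{(1)}_\varepsilon,\dots,\lambda^{(N)}_\varepsilon$, labelled so that each $\varepsilon\mapsto\lambda^{(\ell)}_\varepsilon$ is continuous on $(0,\gamma)$ and $\lambda^{(\ell)}_\varepsilon\to e^{-2\pi ik\beta_s}$ as $\varepsilon\to0$ whenever $\ell\in B_s$. Then: (i) there exists an orthonormal eigenbasis $\{f^{(1)},\dots,f^{(N)}\}$ of $\hat P_\beta$ such that $[f^{(\ell)}_\varepsilon]\to[f^{(\ell)}]$ in $\mathbb{CP}^{N-1}$ as $\varepsilon\to0$, i.e. $\min_{\theta\in[0,2\pi)}\|f^{(\ell)}_\varepsilon-e^{i\theta}f^{(\ell)}\|\to0$, for every $\ell$; (ii) for $s\in\{1,\dots,S\}$ and $\ell\in B_s$, letting $\hat\lambda^{(\ell)}$ be the eigenvalue of $\hat P_\beta$ associated with $f^{(\ell)}$, we have $\lambda^{(\ell)}_\varepsilon=e^{-2\pi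 ik\beta_s}+\varepsilon\hat\lambda^{(\ell)}+o(\varepsilon)$ as $\varepsilon\to0$. Moreover, if $\hat\lambda^{(\ell)}\ne0$, then $\arg\hat\lambda^{(\ell)}=\arg\bigl(e^{-2\pi ik\beta_s}\bigr)+\pi$ (mod $2\pi$).
   Context: A band-width vector is $L=(L_1,\dots,L_S)$ of positive integers with $\sum_sL_s=N$; $N_0=0$, $N_s=N_{s-1}+L_s$, $B_s=\{j:N_{s-1}<j\le N_s\}$. $D_{k,\beta,L}$ is the diagonal matrix with $j$-th entry $e^{-2\pi ik\beta_s}$ for $j\in B_s$. $\dot W$ is $L$-admissible if it is real symmetric and (1) $\dot W_{ij}\ge0$ for $i\ne j$, $\sum_j\dot W_{ij}=0$ for all $i$; (2) $\dot W$ has $N$ distinct eigenvalues; (3) each $\hat W_s=(\dot W_{jk})_{j,k\in B_s}$ has $L_s$ distinct eigenvalues. $\hat W_L$ is block diagonal with blocks $\hat W_1,\dots,\hat W_S$. $\Gamma=\{\beta\in\mathbb R^S: e^{-2\pi ik\beta_{s_1}}\neq e^{-2\pi ik\beta_{s_2}}\text{ for all }k\ne0,\ s_1\ne s_2\}$. $\mathbb{CP}^{N-1}$ is the complex projective space, $[v]$ the class of $v\ne0$, with distance $\mathrm{dist}([v],[w])=\min_\theta\|v/\|v\|-e^{i\theta}w/\|w\|\|$. Norms and inner products are the standard ones on $\mathbb C^N$. *)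

theory Defs
  imports "Jordan_Normal_Form.Char_Poly" "HOL-Library.Landau_Symbols"
begin

text \<open>Band-width vectors are lists L of positive naturals; S = length L, N = sum_list L.
  Indices are 0-based: block s (s < S) is the index set {N_s ..< N_(s+1)} with
  N_s = sum_list (take s L).\<close>

definition Npre :: "nat list \<Rightarrow> nat \<Rightarrow> nat" where
  "Npre L s = sum_list (take s L)"

definition block :: "nat list \<Rightarrow> nat \<Rightarrow> nat set" where
  "block L s = {Npre L s ..< Npre L (Suc s)}"

definition bandwidth_vector :: "nat list \<Rightarrow> bool" where
  "bandwidth_vector L \<longleftrightarrow> (\<forall>s < length L. L ! s > 0)"

definition phase :: "int \<Rightarrow> (nat \<Rightarrow> real) \<Rightarrow> nat \<Rightarrow> complex" where
  "phase k \<beta> s = exp (- 2 * of_real pi * \<i> * of_int k * of_real (\<beta> s))"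

definition Dmat :: "int \<Rightarrow> (nat \<Rightarrow> real) \<Rightarrow> nat list \<Rightarrow> complex mat" where
  "Dmat k \<beta> L = mat (sum_list L) (sum_list L)
     (\<lambda>(i,j). if i = j then (\<Sum>s<length L. if i \<in> block L s then phase k \<beta> s else 0) else 0)"

definition Wblock :: "nat list \<Rightarrow> real mat \<Rightarrow> nat \<Rightarrow> real mat" where
  "Wblock L W s = mat (L ! s) (L ! s) (\<lambda>(i,j). W $$ (Npre L s + i, Npre L s + j))"

definition WhatL :: "nat list \<Rightarrow> real mat \<Rightarrow> real mat" where
  "WhatL L W = mat (sum_list L) (sum_list L)
     (\<lambda>(i,j). if \<exists>s < length L. i \<in> block L s \<and> j \<in> block L s then W $$ (i,j) else 0)"

definition admissible :: "nat list \<Rightarrow> real mat \<Rightarrow> bool" where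
  "admissible L W \<longleftrightarrow>
     W \<in> carrier_mat (sum_list L) (sum_list L) \<and> transpose_mat W = W \<and>
     (\<forall>i < sum_list L. \<forall>j < sum_list L. i \<noteq> j \<longrightarrow> W $$ (i,j) \<ge> 0) \<and>
     (\<forall>i < sum_list L. (\<Sum>j < sum_list L. W $$ (i,j)) = 0) \<and>
     card {\<mu>. eigenvalue W \<mu>} = sum_list L \<and>
     (\<forall>s < length L. card {\<mu>. eigenvalue (Wblock L W s) \<mu>} = L ! s)"

definition Gamma :: "nat \<Rightarrow> (nat \<Rightarrow> real) set" where
  "Gamma S = {\<beta>. \<forall>k::int. k \<noteq> 0 \<longrightarrow> (\<forall>s1 < S. \<forall>s2 < S. s1 \<noteq> s2 \<longrightarrow>
                   phase k \<beta> s1 \<noteq> phase k \<beta> s2)}"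

definition vnorm :: "complex vec \<Rightarrow> real" where
  "vnorm v = sqrt (\<Sum>i < dim_vec v. (cmod (v $ i))\<^sup>2)"

definition cp_dist :: "complex vec \<Rightarrow> complex vec \<Rightarrow> real" where
  "cp_dist v w = Inf ((\<lambda>\<theta>. vnorm (complex_of_real (1 / vnorm v) \<cdot>\<^sub>v v
                      - (exp (\<i> * of_real \<theta>) * complex_of_real (1 / vnorm w)) \<cdot>\<^sub>v w)) ` {0..<2*pi})"

end

theory Submission
  imports Defs
begin



lemma Npre_Suc: "Npre L (Suc t) = Npre L t + (if t < length L then L ! t else 0)"
  unfolding Npre_def by (auto simp: take_Suc_conv_app_nth)

lemma Npre_mono: "s \<le> t \<Longrightarrow> Npre L s \<le> Npre L t"
  by (rule lift_Suc_mono_le[of "Npre L"]) (auto simp: Npre_Suc)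

lemma Npre_len: "Npre L (length L) = sum_list L"
  unfolding Npre_def by simp

lemma Npre_0: "Npre L 0 = 0" unfolding Npre_def by simp

lemma block_ex_aux: "i < Npre L m \<Longrightarrow> \<exists>s<m. Npre L s \<le> i \<and> i < Npre L (Suc s)"
proof (induction m)
  case 0 then show ?case by (simp add: Npre_0)
next
  case (Suc m)
  show ?case
  proof (cases "i < Npre L m")
    case True then show ?thesis using Suc.IH by (meson less_SucI)
  next
    case False then show ?thesis using Suc.prems by (intro exI[of _ m]) auto
  qed
qed

lemma block_ex: "i < sum_list L \<Longrightarrow> \<exists>s<length L. i \<in> block L s"
  using block_ex_aux[of i L "length L"] by (auto simp: Npre_len block_def)

lemma block_unique: "i \<in> block L s \<Longrightarrow> i \<in> block L t \<Longrightarrow> s = t"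
proof (rule ccontr)
  assume a: "i \<in> block L s" "i \<in> block L t" "s \<noteq> t"
  { fix a b assume "i \<in> block L a" "i \<in> block L b" "a < b"
    then have False using Npre_mono[of "Suc a" b L] by (auto simp: block_def) }
  then show False using a by (metis linorder_neqE_nat)
qed

lemma block_sub: "s < length L \<Longrightarrow> block L s \<subseteq> {..<sum_list L}"
  using Npre_mono[of "Suc s" "length L" L] by (auto simp: block_def Npre_len)

lemma block_eq: "s < length L \<Longrightarrow> block L s = {Npre L s ..< Npre L s + L ! s}"
  by (simp add: block_def Npre_Suc)

lemma block_image: assumes "s < length L" shows "block L s = (\<lambda>j. Npre L s + j) ` {..<L ! s}"
proof -
  have "x \<in> (\<lambda>j. Npre L s + j) ` {..<L ! s}" if "Npre L s \<le> x" "x < Npre L s + L ! s" for x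
    using that by (intro image_eqI[of _ _ "x - Npre L s"]) auto
  then show ?thesis using assms by (auto simp: block_eq)
qed

lemma sum_split_block:
  assumes "s < length L"
  shows "(\<Sum>i<sum_list L. h i) = (\<Sum>j<L ! s. h (Npre L s + j)) + (\<Sum>i\<in>{..<sum_list L} - block L s. h i)"
proof -
  have "(\<Sum>i<sum_list L. h i) = (\<Sum>i\<in>block L s. h i) + (\<Sum>i\<in>{..<sum_list L} - block L s. h i)"
    using block_sub[OF assms] sum.subset_diff[of "block L s" "{..<sum_list L}" h] by (simp add: add.commute)
  also have "(\<Sum>i\<in>block L s. h i) = (\<Sum>j<L ! s. h (Npre L s + j))"
    unfolding block_image[OF assms] by (subst sum.reindex) (auto simp: inj_on_def)
  finally show ?thesis .
qed

definition blk :: "nat list \<Rightarrow> nat \<Rightarrow> nat" where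
  "blk L i = (THE s. s < length L \<and> i \<in> block L s)"

lemma blk: "i < sum_list L \<Longrightarrow> blk L i < length L \<and> i \<in> block L (blk L i)"
  unfolding blk_def by (rule theI') (use block_ex block_unique in blast)

lemma blk_eq: "s < length L \<Longrightarrow> i \<in> block L s \<Longrightarrow> blk L i = s"
  using blk block_sub block_unique by (metis lessThan_iff subsetD)

lemma sum_block_delta:
  assumes "s < length L" "i \<in> block L s"
  shows "(\<Sum>t<length L. if i \<in> block L t then (c t::complex) else 0) = c s"
proof -
  have "(\<Sum>t<length L. if i \<in> block L t then c t else 0) = (\<Sum>t<length L. if t = s then c t else 0)"
    using assms block_unique by (intro sum.cong) auto
  then show ?thesis using assms by simp
qed

lemma Dmat_index:
  assumes "i < sum_list L" "j < sum_list L"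
  shows "Dmat k \<beta> L $$ (i,j) = (if i = j then phase k \<beta> (blk L i) else 0)"
  using assms blk[OF assms(1)] sum_block_delta[of "blk L i" L i "phase k \<beta>"] by (auto simp add: Dmat_def)

lemma Dmat_carrier: "Dmat k \<beta> L \<in> carrier_mat (sum_list L) (sum_list L)"
  by (simp add: Dmat_def)

lemma norm_phase: "cmod (phase k \<beta> s) = 1"
proof -
  have "phase k \<beta> s = cis (- 2 * pi * k * \<beta> s)"
    unfolding phase_def cis_conv_exp by (simp add: algebra_simps)
  then show ?thesis by simp
qed

lemma phase_nz: "phase k \<beta> s \<noteq> 0"
  using norm_phase[of k \<beta> s] by auto


lemma Dmat_mult_apply:
  fixes M :: "complex mat"
  assumes M: "M \<in> carrier_mat (sum_list L) (sum_list L)" and x: "x \<in> carrier_vec (sum_list L)"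
    and i: "i < sum_list L"
  shows "((Dmat k \<beta> L * M) *\<^sub>v x) $ i = phase k \<beta> (blk L i) * (\<Sum>j<sum_list L. M $$ (i,j) * x $ j)"
proof -
  let ?N = "sum_list L"
  have e: "(Dmat k \<beta> L * M) $$ (i,j) = phase k \<beta> (blk L i) * M $$ (i,j)" if j: "j < ?N" for j
  proof -
    have "(Dmat k \<beta> L * M) $$ (i,j) = (\<Sum>m<?N. Dmat k \<beta> L $$ (i,m) * M $$ (m,j))"
      using M i j by (simp add: Dmat_def scalar_prod_def lessThan_atLeast0)
    also have "\<dots> = (\<Sum>m<?N. if m = i then phase k \<beta> (blk L i) * M $$ (m,j) else 0)"
      using i by (intro sum.cong) (auto simp: Dmat_index)
    also have "\<dots> = phase k \<beta> (blk L i) * M $$ (i,j)" using i by simp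
    finally show ?thesis .
  qed
  have "((Dmat k \<beta> L * M) *\<^sub>v x) $ i = (\<Sum>j<?N. (Dmat k \<beta> L * M) $$ (i,j) * x $ j)"
    using M i x by (simp add: Dmat_def scalar_prod_def lessThan_atLeast0)
  also have "\<dots> = (\<Sum>j<?N. phase k \<beta> (blk L i) * (M $$ (i,j) * x $ j))"
    by (intro sum.cong) (auto simp: e)
  finally show ?thesis by (simp add: sum_distrib_left)
qed

lemma P_apply:
  fixes W :: "real mat"
  assumes W: "W \<in> carrier_mat (sum_list L) (sum_list L)" and x: "x \<in> carrier_vec (sum_list L)"
    and i: "i < sum_list L"
  shows "((Dmat k \<beta> L * (1\<^sub>m (sum_list L) + complex_of_real e \<cdot>\<^sub>m map_mat complex_of_real W)) *\<^sub>v x) $ i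
     = phase k \<beta> (blk L i) * (x $ i + complex_of_real e * (\<Sum>j<sum_list L. complex_of_real (W $$ (i,j)) * x $ j))"
proof -
  let ?N = "sum_list L"
  have "(\<Sum>j<?N. (1\<^sub>m ?N + complex_of_real e \<cdot>\<^sub>m map_mat complex_of_real W) $$ (i,j) * x $ j)
      = (\<Sum>j<?N. (if i = j then x $ j else 0) + complex_of_real e * (complex_of_real (W $$ (i,j)) * x $ j))"
    using W i by (intro sum.cong) (auto simp: algebra_simps)
  also have "\<dots> = x $ i + complex_of_real e * (\<Sum>j<sum_list L. complex_of_real (W $$ (i,j)) * x $ j)"
    using i by (simp add: sum.distrib sum_distrib_left)
  finally show ?thesis using W x i by (subst Dmat_mult_apply) auto
qed

lemma Wblock_apply:
  assumes x: "x \<in> carrier_vec (L ! s)" and j: "j < L ! s"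
  shows "(Wblock L W s *\<^sub>v x) $ j = (\<Sum>j'<L ! s. W $$ (Npre L s + j, Npre L s + j') * x $ j')"
  using x j by (simp add: Wblock_def scalar_prod_def lessThan_atLeast0)


lemma spectral:
  fixes A :: "real mat"
  assumes A: "A \<in> carrier_mat n n" and sym: "\<forall>i<n. \<forall>j<n. A$$(i,j) = A$$(j,i)"
    and card: "card {\<mu>. eigenvalue A \<mu>} = n"
  shows "\<exists>\<nu> r. (\<forall>q<n. \<forall>p<n. \<nu> q = \<nu> p \<longrightarrow> q = p) \<and> (\<forall>q<n. eigenvalue A (\<nu> q)) \<and>
     (\<forall>q<n. \<forall>i<n. (\<Sum>j<n. A$$(i,j) * r q j) = \<nu> q * r q i) \<and>
     (\<forall>q<n. \<forall>p<n. (\<Sum>j<n. r q j * r p j) = (if q = p then 1 else 0)) \<and>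
     (\<forall>i<n. \<forall>j<n. (\<Sum>q<n. r q i * r q j) = (if i = j then 1 else 0))"
proof (cases "n = 0")
  case True then show ?thesis by auto
next
  case False
  let ?E = "{\<mu>. eigenvalue A \<mu>}"
  have fin: "finite ?E" using card False card.infinite by fastforce
  obtain \<nu> where bij: "bij_betw \<nu> {0..<n} ?E" using ex_bij_betw_nat_finite[OF fin] card by auto
  have inj: "\<forall>q<n. \<forall>p<n. \<nu> q = \<nu> p \<longrightarrow> q = p" using bij by (auto simp: bij_betw_def inj_on_def)
  have ev: "\<forall>q<n. eigenvalue A (\<nu> q)" using bij by (auto simp: bij_betw_def)
  define v where "v q = (SOME v. eigenvector A v (\<nu> q))" for q
  have v: "eigenvector A (v q) (\<nu> q)" if "q < n" for q
    using ev that unfolding v_def eigenvalue_def by (metis someI_ex)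
  have vc: "v q \<in> carrier_vec n" and vnz: "v q \<noteq> 0\<^sub>v n" and veq: "A *\<^sub>v v q = \<nu> q \<cdot>\<^sub>v v q" if "q < n" for q
    using v[OF that] A by (auto simp: eigenvector_def)
  define nr where "nr q = sqrt (\<Sum>j<n. (v q $ j)\<^sup>2)" for q
  have nrpos: "nr q > 0" if qn: "q < n" for q
  proof -
    obtain j where "j < n" "v q $ j \<noteq> 0" using vnz[OF qn] vc[OF qn]
      by (metis carrier_vecD eq_vecI index_zero_vec(1) index_zero_vec(2))
    then have "(\<Sum>j<n. (v q $ j)\<^sup>2) > 0"
      by (intro sum_pos2[of _ j]) auto
    then show ?thesis by (simp add: nr_def)
  qed
  define r where "r q j = v q $ j / nr q" for q j
  have eig: "(\<Sum>j<n. A$$(i,j) * r q j) = \<nu> q * r q i" if "q < n" "i < n" for q i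
  proof -
    have "(A *\<^sub>v v q) $ i = (\<Sum>j<n. A$$(i,j) * v q $ j)"
      using A vc[OF that(1)] that by (simp add: scalar_prod_def lessThan_atLeast0)
    then have "(\<Sum>j<n. A$$(i,j) * v q $ j) = \<nu> q * v q $ i"
      using veq[OF that(1)] that vc[OF that(1)] by simp
    then show ?thesis unfolding r_def
      by (simp add: sum_divide_distrib[symmetric] times_divide_eq_right)
  qed
  have norm1: "(\<Sum>j<n. r q j * r q j) = 1" if "q < n" for q
  proof -
    have "(\<Sum>j<n. r q j * r q j) = (\<Sum>j<n. (v q $ j)\<^sup>2) / (nr q)\<^sup>2"
      unfolding r_def by (simp add: sum_divide_distrib power2_eq_square)
    also have "(nr q)\<^sup>2 = (\<Sum>j<n. (v q $ j)\<^sup>2)" unfolding nr_def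
      by (simp add: sum_nonneg)
    finally show ?thesis using nrpos[OF that] by (simp add: nr_def)
  qed
  have orth: "(\<Sum>j<n. r q j * r p j) = 0" if "q < n" "p < n" "q \<noteq> p" for q p
  proof -
    have "\<nu> q * (\<Sum>j<n. r q j * r p j) = (\<Sum>j<n. (\<Sum>i<n. A$$(j,i) * r q i) * r p j)"
      using eig that by (simp add: sum_distrib_left sum_distrib_right mult.assoc)
    also have "\<dots> = (\<Sum>j<n. \<Sum>i<n. A$$(j,i) * r q i * r p j)"
      by (simp add: sum_distrib_right)
    also have "\<dots> = (\<Sum>i<n. \<Sum>j<n. A$$(j,i) * r q i * r p j)"
      by (rule sum.swap)
    also have "\<dots> = (\<Sum>i<n. \<Sum>j<n. r q i * (A$$(i,j) * r p j))"
      using sym by (intro sum.cong refl) (simp add: mult.commute mult.left_commute)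
    also have "\<dots> = (\<Sum>i<n. r q i * (\<Sum>j<n. A$$(i,j) * r p j))"
      by (simp add: sum_distrib_left)
    also have "\<dots> = \<nu> p * (\<Sum>i<n. r q i * r p i)"
      using eig that by (simp add: sum_distrib_left mult.commute mult.left_commute)
    finally have "(\<nu> q - \<nu> p) * (\<Sum>j<n. r q j * r p j) = 0" by (simp add: algebra_simps)
    then show ?thesis using inj that by auto
  qed
  have on: "\<forall>q<n. \<forall>p<n. (\<Sum>j<n. r q j * r p j) = (if q = p then 1 else 0)"
    using orth norm1 by auto
  define R where "R = mat n n (\<lambda>(j,q). r q j)"
  have Rc: "R \<in> carrier_mat n n" "transpose_mat R \<in> carrier_mat n n" by (auto simp: R_def)
  have "transpose_mat R * R = 1\<^sub>m n"
    by (rule eq_matI) (auto simp: R_def scalar_prod_def atLeast0LessThan on)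
  then have "R * transpose_mat R = 1\<^sub>m n" using mat_mult_left_right_inverse[OF Rc(2) Rc(1)] by auto
  then have comp: "\<forall>i<n. \<forall>j<n. (\<Sum>q<n. r q i * r q j) = (if i = j then 1 else 0)"
  proof (intro allI impI)
    fix i j assume RR: "R * transpose_mat R = 1\<^sub>m n" and ij: "i < n" "j < n"
    have "(R * transpose_mat R) $$ (i,j) = (\<Sum>q<n. r q i * r q j)"
      using ij by (simp add: R_def scalar_prod_def lessThan_atLeast0)
    then show "(\<Sum>q<n. r q i * r q j) = (if i = j then 1 else 0)" using RR ij by simp
  qed
  show ?thesis using inj ev eig on comp by blast
qed


lemma cmod_sq_complex: "complex_of_real ((cmod z)\<^sup>2) = z * cnj z"
  by (rule complex_norm_square)

lemma parseval:
  fixes r :: "nat \<Rightarrow> nat \<Rightarrow> real" and x :: "nat \<Rightarrow> complex"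
  assumes comp: "\<forall>i<n. \<forall>j<n. (\<Sum>q<n. r q i * r q j) = (if i = j then 1 else 0)"
  shows "(\<Sum>p<n. (cmod (\<Sum>j<n. complex_of_real (r p j) * x j))\<^sup>2) = (\<Sum>j<n. (cmod (x j))\<^sup>2)"
proof -
  have "complex_of_real (\<Sum>p<n. (cmod (\<Sum>j<n. complex_of_real (r p j) * x j))\<^sup>2)
     = (\<Sum>p<n. (\<Sum>j<n. complex_of_real (r p j) * x j) * (\<Sum>i<n. complex_of_real (r p i) * cnj (x i)))"
    by (simp only: of_real_sum cmod_sq_complex) (simp add: cnj_sum)
  also have "\<dots> = (\<Sum>p<n. \<Sum>j<n. \<Sum>i<n. complex_of_real (r p j * r p i) * (x j * cnj (x i)))"
    by (simp add: sum_product mult_ac)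
  also have "\<dots> = (\<Sum>j<n. \<Sum>i<n. \<Sum>p<n. complex_of_real (r p j * r p i) * (x j * cnj (x i)))"
    by (subst sum.swap) (subst (2) sum.swap, rule refl)
  also have "\<dots> = (\<Sum>j<n. \<Sum>i<n. complex_of_real (\<Sum>p<n. r p j * r p i) * (x j * cnj (x i)))"
    by (simp add: sum_distrib_right)
  also have "\<dots> = (\<Sum>j<n. \<Sum>i<n. (if j = i then x j * cnj (x i) else 0))"
    using comp by (intro sum.cong refl) auto
  also have "\<dots> = (\<Sum>j<n. x j * cnj (x j))" by simp
  also have "\<dots> = complex_of_real (\<Sum>j<n. (cmod (x j))\<^sup>2)"
    by (simp only: of_real_sum cmod_sq_complex)
  finally show ?thesis using of_real_eq_iff by blast
qed

lemma cmod_sub_sgn: "cmod (c - (if c = 0 then 1 else sgn c)) = \<bar>cmod c - 1\<bar>"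
proof (cases "c = 0")
  case False
  have "sgn c * complex_of_real (cmod c) = c"
    using False by (simp add: sgn_div_norm scaleR_conv_of_real field_simps)
  then have "c - sgn c = sgn c * complex_of_real (cmod c - 1)" by (simp add: algebra_simps)
  then have "cmod (c - sgn c) = cmod (sgn c) * cmod (complex_of_real (cmod c - 1))" by (simp only: norm_mult)
  then have "cmod (c - sgn c) = \<bar>cmod c - 1\<bar>" using False by (simp only: norm_sgn norm_of_real) simp
  then show ?thesis using False by simp
qed simp

lemma norm_sgn_if: "cmod (if c = 0 then 1 else sgn c) = 1"
  by (simp add: norm_sgn)

lemma dist_sep:
  fixes \<nu> :: "nat \<Rightarrow> real"
  assumes dist: "\<forall>q<n. \<forall>p<n. \<nu> q = \<nu> p \<longrightarrow> q = p"
  obtains \<delta> where "\<delta> > 0" "\<And>p q. p < n \<Longrightarrow> q < n \<Longrightarrow> p \<noteq> q \<Longrightarrow> \<delta> \<le> \<bar>\<nu> p - \<nu> q\<bar>"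
proof -
  define X where "X = insert 1 ((\<lambda>(p,q). \<bar>\<nu> p - \<nu> q\<bar>) ` ({..<n} \<times> {..<n} - {(p,q). p = q}))"
  have fin: "finite X" unfolding X_def by auto
  have pos: "\<forall>x\<in>X. x > 0" unfolding X_def using dist by auto
  have "Min X \<in> X" using fin by (intro Min_in) (auto simp: X_def)
  then have "Min X > 0" using pos by auto
  moreover have "Min X \<le> \<bar>\<nu> p - \<nu> q\<bar>" if "p < n" "q < n" "p \<noteq> q" for p q
    using fin that by (intro Min_le) (auto simp: X_def)
  ultimately show ?thesis using that by blast
qed

lemma converge_core:
  fixes u :: "real \<Rightarrow> nat \<Rightarrow> complex" and \<kappa> :: "real \<Rightarrow> complex" and \<nu> :: "nat \<Rightarrow> real"
    and r a :: "nat \<Rightarrow> nat \<Rightarrow> real"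
  assumes n: "0 < n"
    and dist: "\<forall>q<n. \<forall>p<n. \<nu> q = \<nu> p \<longrightarrow> q = p"
    and eig: "\<forall>q<n. \<forall>i<n. (\<Sum>j<n. a i j * r q j) = \<nu> q * r q i"
    and symm: "\<forall>i<n. \<forall>j<n. a i j = a j i"
    and on: "\<forall>q<n. \<forall>p<n. (\<Sum>j<n. r q j * r p j) = (if q = p then 1 else 0)"
    and comp: "\<forall>i<n. \<forall>j<n. (\<Sum>q<n. r q i * r q j) = (if i = j then 1 else 0)"
    and \<gamma>: "\<gamma> > 0" and cont: "continuous_on {0<..<\<gamma>} \<kappa>"
    and v0: "\<forall>j<n. ((\<lambda>\<epsilon>. (\<Sum>j'<n. complex_of_real (a j j') * u \<epsilon> j') - \<kappa> \<epsilon> * u \<epsilon> j) \<longlongrightarrow> 0) (at_right 0)"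
    and u1: "((\<lambda>\<epsilon>. \<Sum>j<n. (cmod (u \<epsilon> j))\<^sup>2) \<longlongrightarrow> 1) (at_right 0)"
  shows "\<exists>q<n. (\<kappa> \<longlongrightarrow> complex_of_real (\<nu> q)) (at_right 0) \<and>
     (\<exists>z. (\<forall>\<epsilon>. cmod (z \<epsilon>) = 1) \<and>
       ((\<lambda>\<epsilon>. \<Sum>j<n. (cmod (u \<epsilon> j - z \<epsilon> * complex_of_real (r q j)))\<^sup>2) \<longlongrightarrow> 0) (at_right 0))"
proof -
  define c where "c \<epsilon> p = (\<Sum>j<n. complex_of_real (r p j) * u \<epsilon> j)" for \<epsilon> p
  define v where "v \<epsilon> j = (\<Sum>j'<n. complex_of_real (a j j') * u \<epsilon> j') - \<kappa> \<epsilon> * u \<epsilon> j" for \<epsilon> j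
  have coef: "(\<Sum>j<n. complex_of_real (r p j) * v \<epsilon> j) = (complex_of_real (\<nu> p) - \<kappa> \<epsilon>) * c \<epsilon> p"
    if p: "p < n" for p \<epsilon>
  proof -
    have "(\<Sum>j<n. complex_of_real (r p j) * (\<Sum>j'<n. complex_of_real (a j j') * u \<epsilon> j'))
        = (\<Sum>j<n. \<Sum>j'<n. complex_of_real (r p j * a j j') * u \<epsilon> j')"
      by (simp add: sum_distrib_left mult.assoc)
    also have "\<dots> = (\<Sum>j'<n. \<Sum>j<n. complex_of_real (a j' j * r p j) * u \<epsilon> j')"
      by (subst sum.swap) (use symm in \<open>auto intro!: sum.cong simp: mult.commute\<close>)
    also have "\<dots> = (\<Sum>j'<n. complex_of_real (\<Sum>j<n. a j' j * r p j) * u \<epsilon> j')"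
      by (simp add: sum_distrib_right)
    also have "\<dots> = (\<Sum>j'<n. complex_of_real (\<nu> p) * (complex_of_real (r p j') * u \<epsilon> j'))"
      using eig p by (intro sum.cong) auto
    finally have 1: "(\<Sum>j<n. complex_of_real (r p j) * (\<Sum>j'<n. complex_of_real (a j j') * u \<epsilon> j'))
       = complex_of_real (\<nu> p) * c \<epsilon> p" by (simp add: c_def sum_distrib_left)
    have 2: "(\<Sum>j<n. complex_of_real (r p j) * (\<kappa> \<epsilon> * u \<epsilon> j)) = \<kappa> \<epsilon> * c \<epsilon> p"
      by (simp add: c_def sum_distrib_left mult_ac)
    show ?thesis unfolding v_def using 1 2
      by (simp add: right_diff_distrib sum_subtractf left_diff_distrib)
  qed
  define A where "A \<epsilon> = (\<Sum>p<n. (cmod (complex_of_real (\<nu> p) - \<kappa> \<epsilon>))\<^sup>2 * (cmod (c \<epsilon> p))\<^sup>2)" for \<epsilon>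
  define Bs where "Bs \<epsilon> = (\<Sum>p<n. (cmod (c \<epsilon> p))\<^sup>2)" for \<epsilon>
  have A_eq: "A \<epsilon> = (\<Sum>j<n. (cmod (v \<epsilon> j))\<^sup>2)" for \<epsilon>
  proof -
    have "A \<epsilon> = (\<Sum>p<n. (cmod (\<Sum>j<n. complex_of_real (r p j) * v \<epsilon> j))\<^sup>2)"
      unfolding A_def by (intro sum.cong) (auto simp: coef norm_mult power_mult_distrib)
    then show ?thesis using parseval[OF comp] by simp
  qed
  have Bs_eq: "Bs \<epsilon> = (\<Sum>j<n. (cmod (u \<epsilon> j))\<^sup>2)" for \<epsilon>
    unfolding Bs_def c_def using parseval[OF comp] by simp
  have A0: "(A \<longlongrightarrow> 0) (at_right 0)"
  proof -
    have "((\<lambda>\<epsilon>. \<Sum>j<n. (cmod (v \<epsilon> j))\<^sup>2) \<longlongrightarrow> 0) (at_right 0)"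
    proof (rule tendsto_null_sum)
      fix j assume "j \<in> {..<n}"
      then have "((\<lambda>\<epsilon>. v \<epsilon> j) \<longlongrightarrow> 0) (at_right 0)" using v0 by (simp add: v_def)
      then have "((\<lambda>\<epsilon>. cmod (v \<epsilon> j)) \<longlongrightarrow> 0) (at_right 0)" by (rule tendsto_norm_zero)
      from tendsto_power[OF this, of 2] show "((\<lambda>\<epsilon>. (cmod (v \<epsilon> j))\<^sup>2) \<longlongrightarrow> 0) (at_right 0)" by simp
    qed
    then show ?thesis by (simp only: A_eq[symmetric])
  qed
  have B1: "(Bs \<longlongrightarrow> 1) (at_right 0)" using u1 by (simp only: Bs_eq[symmetric])
  have near: "eventually (\<lambda>\<epsilon>. \<exists>p<n. cmod (\<kappa> \<epsilon> - complex_of_real (\<nu> p)) < \<eta>) (at_right 0)"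
    if \<eta>: "\<eta> > 0" for \<eta>
  proof -
    have e1: "eventually (\<lambda>\<epsilon>. A \<epsilon> < \<eta>\<^sup>2 / 2) (at_right 0)"
      using order_tendstoD(2)[OF A0, of "\<eta>\<^sup>2/2"] \<eta> by simp
    have e2: "eventually (\<lambda>\<epsilon>. Bs \<epsilon> > 1/2) (at_right 0)"
      using order_tendstoD(1)[OF B1, of "1/2"] by simp
    show ?thesis using e1 e2
    proof eventually_elim
      case (elim \<epsilon>)
      show ?case
      proof (rule ccontr)
        assume "\<not> ?case"
        then have ge: "\<forall>p<n. \<eta> \<le> cmod (complex_of_real (\<nu> p) - \<kappa> \<epsilon>)"
          by (metis norm_minus_commute not_less)
        have "\<eta>\<^sup>2 * Bs \<epsilon> = (\<Sum>p<n. \<eta>\<^sup>2 * (cmod (c \<epsilon> p))\<^sup>2)"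
          by (simp add: Bs_def sum_distrib_left)
        also have "\<dots> \<le> A \<epsilon>" unfolding A_def
          using ge \<eta> by (intro sum_mono mult_right_mono power_mono) auto
        finally have "\<eta>\<^sup>2 * Bs \<epsilon> \<le> A \<epsilon>" .
        moreover have "\<eta>\<^sup>2 * (1/2) < \<eta>\<^sup>2 * Bs \<epsilon>" using elim \<eta> by (intro mult_strict_left_mono) auto
        ultimately show False using elim by simp
      qed
    qed
  qed
  obtain \<delta> where \<delta>: "\<delta> > 0" and sep: "\<And>p q. p < n \<Longrightarrow> q < n \<Longrightarrow> p \<noteq> q \<Longrightarrow> \<delta> \<le> \<bar>\<nu> p - \<nu> q\<bar>"
    using dist_sep[OF dist] by blast
  have tri: "\<bar>\<nu> p - \<nu> q\<bar> \<le> cmod (x - complex_of_real (\<nu> p)) + cmod (x - complex_of_real (\<nu> q))" for p q x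
  proof -
    have "\<bar>\<nu> p - \<nu> q\<bar> = dist (complex_of_real (\<nu> p)) (complex_of_real (\<nu> q))"
      by (simp add: dist_norm flip: of_real_diff)
    also have "\<dots> \<le> dist (complex_of_real (\<nu> p)) x + dist (complex_of_real (\<nu> q)) x"
      by (rule dist_triangle2)
    finally show ?thesis by (simp add: dist_norm norm_minus_commute)
  qed
  obtain b where b: "b > 0" "\<forall>\<epsilon>>0. \<epsilon> < b \<longrightarrow> (\<exists>p<n. cmod (\<kappa> \<epsilon> - complex_of_real (\<nu> p)) < \<delta>/3)"
    using near[of "\<delta>/3"] \<delta> unfolding eventually_at_right_field by auto
  define b' where "b' = min b \<gamma>"
  have b': "b' > 0" "b' \<le> b" "b' \<le> \<gamma>" using b \<gamma> by (auto simp: b'_def)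
  obtain p1 where p1: "p1 < n" "cmod (\<kappa> (b'/2) - complex_of_real (\<nu> p1)) < \<delta>/3"
  proof -
    have "0 < b'/2" "b'/2 < b" using b' by auto
    then show ?thesis using b(2) that by blast
  qed
  define h where "h \<epsilon> = cmod (\<kappa> \<epsilon> - complex_of_real (\<nu> p1))" for \<epsilon>
  have hcont: "continuous_on {x..y} h" if "0 < x" "y < \<gamma>" for x y
  proof -
    have "continuous_on {0<..<\<gamma>} h" unfolding h_def
      by (intro continuous_intros cont)
    then show ?thesis by (rule continuous_on_subset) (use that in auto)
  qed
  have stay: "h \<epsilon> < \<delta>/3" if eps: "0 < \<epsilon>" "\<epsilon> < b'" for \<epsilon>
  proof (rule ccontr)
    assume "\<not> h \<epsilon> < \<delta>/3"
    then have h2: "h \<epsilon> \<ge> \<delta>/3" by simp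
    obtain p2 where p2: "p2 < n" "cmod (\<kappa> \<epsilon> - complex_of_real (\<nu> p2)) < \<delta>/3"
      using b(2) b' eps by auto
    have "p2 \<noteq> p1" using p2 h2 by (auto simp: h_def)
    then have "\<delta> \<le> \<bar>\<nu> p2 - \<nu> p1\<bar>" using sep p1 p2 by auto
    then have hbig: "h \<epsilon> \<ge> \<delta>/2" using tri[of p2 p1 "\<kappa> \<epsilon>"] p2 by (simp add: h_def)
    have hsmall: "h (b'/2) \<le> \<delta>/2" using p1 \<delta> by (simp add: h_def)
    have "\<exists>e3. min \<epsilon> (b'/2) \<le> e3 \<and> e3 \<le> max \<epsilon> (b'/2) \<and> h e3 = \<delta>/2"
    proof (cases "b'/2 \<le> \<epsilon>")
      case True
      then show ?thesis using IVT'[of h "b'/2" "\<delta>/2" \<epsilon>] hsmall hbig hcont[of "b'/2" \<epsilon>] eps b' by auto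
    next
      case False
      then show ?thesis using IVT2'[of h "b'/2" "\<delta>/2" \<epsilon>] hsmall hbig hcont[of \<epsilon> "b'/2"] eps b' by auto
    qed
    then obtain e3 where e3: "min \<epsilon> (b'/2) \<le> e3" "e3 \<le> max \<epsilon> (b'/2)" "h e3 = \<delta>/2" by blast
    have "0 < e3" "e3 < b'" using e3 eps b' by auto
    then obtain p3 where p3: "p3 < n" "cmod (\<kappa> e3 - complex_of_real (\<nu> p3)) < \<delta>/3"
      using b(2) b' by auto
    have "p3 \<noteq> p1" using p3 e3 \<delta> by (auto simp: h_def)
    then have "\<delta> \<le> \<bar>\<nu> p3 - \<nu> p1\<bar>" using sep p1 p3 by auto
    then show False using tri[of p3 p1 "\<kappa> e3"] p3 e3 \<delta> by (simp add: h_def)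
  qed
  have lim: "(\<kappa> \<longlongrightarrow> complex_of_real (\<nu> p1)) (at_right 0)"
    unfolding tendsto_iff
  proof (intro allI impI)
    fix e :: real assume e: "e > 0"
    have min_pos: "0 < min e (\<delta>/3)" using e \<delta> by simp
    have ev1: "eventually (\<lambda>\<epsilon>. \<epsilon> < b') (at_right (0::real))"
      unfolding eventually_at_right_field using b' by auto
    show "eventually (\<lambda>\<epsilon>. dist (\<kappa> \<epsilon>) (complex_of_real (\<nu> p1)) < e) (at_right 0)"
      using near[of "min e (\<delta>/3)", OF min_pos] ev1 eventually_at_right_less[of "0::real"]
    proof (eventually_elim)
      case (elim \<epsilon>)
      then obtain p where p: "p < n" "cmod (\<kappa> \<epsilon> - complex_of_real (\<nu> p)) < min e (\<delta>/3)" by auto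
      have hs: "h \<epsilon> < \<delta>/3" using stay elim by auto
      have "p = p1"
      proof (rule ccontr)
        assume "p \<noteq> p1"
        then have "\<delta> \<le> \<bar>\<nu> p - \<nu> p1\<bar>" using sep p1 p by auto
        then show False using tri[of p p1 "\<kappa> \<epsilon>"] p hs \<delta> by (simp add: h_def)
      qed
      then show ?case using p by (simp add: dist_norm)
    qed
  qed
  define q where "q = p1"
  define R where "R \<epsilon> = (\<Sum>p\<in>{..<n} - {q}. (cmod (c \<epsilon> p))\<^sup>2)" for \<epsilon>
  have evq: "eventually (\<lambda>\<epsilon>. cmod (\<kappa> \<epsilon> - complex_of_real (\<nu> q)) < \<delta>/2) (at_right 0)"
  proof -
    have "\<delta>/2 > 0" using \<delta> by simp
    then show ?thesis using lim unfolding tendsto_iff q_def dist_norm by blast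
  qed
  have R0: "(R \<longlongrightarrow> 0) (at_right 0)"
  proof (rule tendsto_sandwich[of "\<lambda>_. 0" _ _ "\<lambda>\<epsilon>. (4 / \<delta>\<^sup>2) * A \<epsilon>"])
    show "eventually (\<lambda>\<epsilon>. 0 \<le> R \<epsilon>) (at_right 0)" by (intro always_eventually allI) (simp add: R_def sum_nonneg)
    show "((\<lambda>\<epsilon>. (4 / \<delta>\<^sup>2) * A \<epsilon>) \<longlongrightarrow> 0) (at_right 0)"
      using tendsto_mult[OF tendsto_const A0, of "4/\<delta>\<^sup>2"] by simp
    show "((\<lambda>_. 0) \<longlongrightarrow> (0::real)) (at_right 0)" by simp
    show "eventually (\<lambda>\<epsilon>. R \<epsilon> \<le> (4 / \<delta>\<^sup>2) * A \<epsilon>) (at_right 0)"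
      using evq
    proof eventually_elim
      case (elim \<epsilon>)
      have "R \<epsilon> \<le> (\<Sum>p\<in>{..<n} - {q}. (4 / \<delta>\<^sup>2) * ((cmod (complex_of_real (\<nu> p) - \<kappa> \<epsilon>))\<^sup>2 * (cmod (c \<epsilon> p))\<^sup>2))"
        unfolding R_def
      proof (intro sum_mono)
        fix p assume p: "p \<in> {..<n} - {q}"
        then have "\<delta> \<le> \<bar>\<nu> p - \<nu> q\<bar>" using sep p1 q_def by auto
        then have "\<delta>/2 \<le> cmod (complex_of_real (\<nu> p) - \<kappa> \<epsilon>)"
          using tri[of p q "\<kappa> \<epsilon>"] elim by (simp add: norm_minus_commute)
        then have "(\<delta>/2)\<^sup>2 \<le> (cmod (complex_of_real (\<nu> p) - \<kappa> \<epsilon>))\<^sup>2"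
          using \<delta> by (intro power_mono) auto
        then have "1 \<le> (4 / \<delta>\<^sup>2) * (cmod (complex_of_real (\<nu> p) - \<kappa> \<epsilon>))\<^sup>2"
          using \<delta> by (simp add: field_simps power2_eq_square)
        then have "1 * (cmod (c \<epsilon> p))\<^sup>2 \<le> ((4 / \<delta>\<^sup>2) * (cmod (complex_of_real (\<nu> p) - \<kappa> \<epsilon>))\<^sup>2) * (cmod (c \<epsilon> p))\<^sup>2"
          by (intro mult_right_mono) auto
        then show "(cmod (c \<epsilon> p))\<^sup>2 \<le> (4 / \<delta>\<^sup>2) * ((cmod (complex_of_real (\<nu> p) - \<kappa> \<epsilon>))\<^sup>2 * (cmod (c \<epsilon> p))\<^sup>2)"
          by (simp add: mult.assoc)
      qed
      also have "\<dots> = (4 / \<delta>\<^sup>2) * (\<Sum>p\<in>{..<n} - {q}. (cmod (complex_of_real (\<nu> p) - \<kappa> \<epsilon>))\<^sup>2 * (cmod (c \<epsilon> p))\<^sup>2)"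
        by (simp add: sum_distrib_left)
      also have "\<dots> \<le> (4 / \<delta>\<^sup>2) * A \<epsilon>" unfolding A_def
        by (intro mult_left_mono sum_mono2) auto
      finally show ?case .
    qed
  qed
  have qn: "q < n" using p1 q_def by simp
  have Bs_split: "Bs \<epsilon> = (cmod (c \<epsilon> q))\<^sup>2 + R \<epsilon>" for \<epsilon>
    unfolding Bs_def R_def using qn by (subst sum.remove[of _ q]) auto
  have cq: "((\<lambda>\<epsilon>. cmod (c \<epsilon> q)) \<longlongrightarrow> 1) (at_right 0)"
  proof -
    have "((\<lambda>\<epsilon>. Bs \<epsilon> - R \<epsilon>) \<longlongrightarrow> 1 - 0) (at_right 0)" by (intro tendsto_diff B1 R0)
    then have "((\<lambda>\<epsilon>. (cmod (c \<epsilon> q))\<^sup>2) \<longlongrightarrow> 1) (at_right 0)" by (simp add: Bs_split)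
    from tendsto_real_sqrt[OF this] show ?thesis by simp
  qed
  define z where "z \<epsilon> = (if c \<epsilon> q = 0 then 1 else sgn (c \<epsilon> q))" for \<epsilon>
  have zn: "\<forall>\<epsilon>. cmod (z \<epsilon>) = 1" by (simp add: z_def norm_sgn_if)
  have dist_eq: "(\<Sum>j<n. (cmod (u \<epsilon> j - z \<epsilon> * complex_of_real (r q j)))\<^sup>2) = R \<epsilon> + (cmod (c \<epsilon> q) - 1)\<^sup>2" for \<epsilon>
  proof -
    have co: "(\<Sum>j<n. complex_of_real (r p j) * (u \<epsilon> j - z \<epsilon> * complex_of_real (r q j)))
       = c \<epsilon> p - (if p = q then z \<epsilon> else 0)" if p: "p < n" for p
    proof -
      have "(\<Sum>j<n. complex_of_real (r p j) * (u \<epsilon> j - z \<epsilon> * complex_of_real (r q j)))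
         = c \<epsilon> p - z \<epsilon> * complex_of_real (\<Sum>j<n. r p j * r q j)"
        by (simp add: c_def algebra_simps sum_subtractf sum_distrib_left)
      then show ?thesis using on p qn by auto
    qed
    have "(\<Sum>j<n. (cmod (u \<epsilon> j - z \<epsilon> * complex_of_real (r q j)))\<^sup>2)
       = (\<Sum>p<n. (cmod (c \<epsilon> p - (if p = q then z \<epsilon> else 0)))\<^sup>2)"
      using parseval[OF comp, of "\<lambda>j. u \<epsilon> j - z \<epsilon> * complex_of_real (r q j)"] co by simp
    also have "\<dots> = (cmod (c \<epsilon> q - z \<epsilon>))\<^sup>2 + R \<epsilon>"
      unfolding R_def using qn by (subst sum.remove[of _ q]) auto
    also have "cmod (c \<epsilon> q - z \<epsilon>) = \<bar>cmod (c \<epsilon> q) - 1\<bar>" unfolding z_def by (rule cmod_sub_sgn)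
    finally show ?thesis by simp
  qed
  have "((\<lambda>\<epsilon>. R \<epsilon> + (cmod (c \<epsilon> q) - 1)\<^sup>2) \<longlongrightarrow> 0 + (1 - 1)\<^sup>2) (at_right 0)"
    by (intro tendsto_intros R0 cq)
  then have "((\<lambda>\<epsilon>. \<Sum>j<n. (cmod (u \<epsilon> j - z \<epsilon> * complex_of_real (r q j)))\<^sup>2) \<longlongrightarrow> 0) (at_right 0)"
    by (simp add: dist_eq)
  then show ?thesis using qn lim zn q_def by blast
qed


lemma swap1: "(\<Sum>l\<in>L. (\<Sum>i\<in>I. g i l) * (h l::'a::comm_semiring_0)) = (\<Sum>i\<in>I. \<Sum>l\<in>L. g i l * h l)"
  by (simp add: sum_distrib_right) (rule sum.swap)
lemma swap2: "(\<Sum>l\<in>L. (h l::'a::comm_semiring_0) * (\<Sum>i\<in>I. g i l)) = (\<Sum>i\<in>I. \<Sum>l\<in>L. h l * g i l)"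
  by (simp add: sum_distrib_left) (rule sum.swap)

locale setup4 =
  fixes L :: "nat list" and W :: "real mat" and k :: nat and \<beta> :: "nat \<Rightarrow> real"
    and \<gamma> :: real
    and f :: "real \<Rightarrow> nat \<Rightarrow> complex vec" and lam :: "real \<Rightarrow> nat \<Rightarrow> complex"
  assumes L: "bandwidth_vector L" and S: "1 < length L" "length L \<le> sum_list L"
    and W: "admissible L W"
    and k: "k > 0"
    and \<beta>: "\<beta> \<in> Gamma (length L)"
    and \<gamma>: "\<gamma> > 0"
    and distinct_ev: "\<forall>\<epsilon> \<in> {0<..<\<gamma>}. card {\<mu>. eigenvalue (Dmat (int k) \<beta> L * (1\<^sub>m (sum_list L) + complex_of_real \<epsilon> \<cdot>\<^sub>m map_mat complex_of_real W)) \<mu>} = sum_list L"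
    and eigvec: "\<forall>\<epsilon> \<in> {0<..<\<gamma>}. \<forall>l < sum_list L. f \<epsilon> l \<in> carrier_vec (sum_list L) \<and> vnorm (f \<epsilon> l) = 1
                   \<and> (Dmat (int k) \<beta> L * (1\<^sub>m (sum_list L) + complex_of_real \<epsilon> \<cdot>\<^sub>m map_mat complex_of_real W)) *\<^sub>v f \<epsilon> l = lam \<epsilon> l \<cdot>\<^sub>v f \<epsilon> l"
    and basis: "\<forall>\<epsilon> \<in> {0<..<\<gamma>}. \<forall>v \<in> carrier_vec (sum_list L). \<exists>c :: nat \<Rightarrow> complex.
                   v = vec (sum_list L) (\<lambda>i. \<Sum>l < sum_list L. c l * (f \<epsilon> l $ i))"
    and cont: "\<forall>l < sum_list L. continuous_on {0<..<\<gamma>} (\<lambda>\<epsilon>. lam \<epsilon> l)"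
    and lim: "\<forall>s < length L. \<forall>l \<in> block L s. ((\<lambda>\<epsilon>. lam \<epsilon> l) \<longlongrightarrow> phase (int k) \<beta> s) (at_right 0)"
begin

abbreviation "N \<equiv> sum_list L"
abbreviation "P \<equiv> (\<lambda>\<epsilon>::real. Dmat (int k) \<beta> L * (1\<^sub>m N + complex_of_real \<epsilon> \<cdot>\<^sub>m map_mat complex_of_real W))"
abbreviation "ph \<equiv> phase (int k) \<beta>"
abbreviation "d \<equiv> (\<lambda>i. ph (blk L i))"

lemma Wc: "W \<in> carrier_mat N N" using W by (simp add: admissible_def)

lemma Wsym: "i < N \<Longrightarrow> j < N \<Longrightarrow> W $$ (i,j) = W $$ (j,i)"
proof -
  assume ij: "i < N" "j < N"
  have "transpose_mat W = W" using W by (simp add: admissible_def)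
  then have "transpose_mat W $$ (i,j) = W $$ (i,j)" by simp
  then show ?thesis using ij Wc by simp
qed

lemma P_apply': "x \<in> carrier_vec N \<Longrightarrow> i < N \<Longrightarrow>
   (P \<epsilon> *\<^sub>v x) $ i = d i * (x $ i + complex_of_real \<epsilon> * (\<Sum>j<N. complex_of_real (W $$ (i,j)) * x $ j))"
  using P_apply[OF Wc] by blast

lemma eq_comp:
  assumes e: "\<epsilon> \<in> {0<..<\<gamma>}" and l: "l < N" and i: "i < N"
  shows "d i * (f \<epsilon> l $ i + complex_of_real \<epsilon> * (\<Sum>j<N. complex_of_real (W $$ (i,j)) * f \<epsilon> l $ j))
     = lam \<epsilon> l * f \<epsilon> l $ i"
proof -
  have fc: "f \<epsilon> l \<in> carrier_vec N" and ev: "P \<epsilon> *\<^sub>v f \<epsilon> l = lam \<epsilon> l \<cdot>\<^sub>v f \<epsilon> l"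
    using eigvec e l by auto
  have "(P \<epsilon> *\<^sub>v f \<epsilon> l) $ i = lam \<epsilon> l * f \<epsilon> l $ i" using ev fc i by simp
  then show ?thesis using P_apply'[OF fc i] by simp
qed

lemma fsum1:
  assumes e: "\<epsilon> \<in> {0<..<\<gamma>}" and l: "l < N"
  shows "(\<Sum>i<N. (cmod (f \<epsilon> l $ i))\<^sup>2) = 1"
proof -
  have fc: "f \<epsilon> l \<in> carrier_vec N" and n: "vnorm (f \<epsilon> l) = 1" using eigvec e l by auto
  then have "sqrt (\<Sum>i<N. (cmod (f \<epsilon> l $ i))\<^sup>2) = 1" unfolding vnorm_def by simp
  then show ?thesis by simp
qed

lemma fbound:
  assumes e: "\<epsilon> \<in> {0<..<\<gamma>}" and l: "l < N" and i: "i < N"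
  shows "cmod (f \<epsilon> l $ i) \<le> 1"
proof -
  have "(cmod (f \<epsilon> l $ i))\<^sup>2 \<le> (\<Sum>i<N. (cmod (f \<epsilon> l $ i))\<^sup>2)"
    using i by (intro member_le_sum) auto
  then have "(cmod (f \<epsilon> l $ i))\<^sup>2 \<le> 1\<^sup>2" using fsum1[OF e l] by simp
  then show ?thesis by (rule power2_le_imp_le) simp
qed

lemma phase_distinct:
  assumes "s < length L" "t < length L" "s \<noteq> t"
  shows "ph s \<noteq> ph t"
  using \<beta> k assms unfolding Gamma_def by auto

lemma lam_inj:
  assumes e: "\<epsilon> \<in> {0<..<\<gamma>}"
  shows "inj_on (lam \<epsilon>) {..<N}"
proof -
  have "\<forall>i. \<exists>c. i < N \<longrightarrow> unit_vec N i = vec N (\<lambda>i'. \<Sum>l<N. c l * f \<epsilon> l $ i')"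
    using basis e unit_vec_carrier by blast
  from choice[OF this] obtain C where C0: "\<forall>i. i < N \<longrightarrow> unit_vec N i = vec N (\<lambda>i'. \<Sum>l<N. C i l * f \<epsilon> l $ i')"
    by blast
  have C: "\<And>i. i < N \<Longrightarrow> unit_vec N i = vec N (\<lambda>i'. \<Sum>l<N. C i l * f \<epsilon> l $ i')" using C0 by blast
  have FG: "(\<Sum>l<N. f \<epsilon> l $ i * C i' l) = (if i = i' then 1 else 0)" if "i < N" "i' < N" for i i'
  proof -
    have "unit_vec N i' $ i = (\<Sum>l<N. C i' l * f \<epsilon> l $ i)" using C[of i'] that by simp
    then show ?thesis using that by (simp add: mult.commute)
  qed
  define F where "F = mat N N (\<lambda>(i,l). f \<epsilon> l $ i)"
  define G where "G = mat N N (\<lambda>(l,i). C i l)"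
  have "F * G = 1\<^sub>m N"
    by (rule eq_matI) (auto simp: F_def G_def scalar_prod_def atLeast0LessThan FG)
  moreover have "F \<in> carrier_mat N N" "G \<in> carrier_mat N N" by (simp_all add: F_def G_def)
  ultimately have "G * F = 1\<^sub>m N" using mat_mult_left_right_inverse by blast
  then have GF: "(\<Sum>i<N. C i l * f \<epsilon> l' $ i) = (if l = l' then 1 else 0)" if "l < N" "l' < N" for l l'
  proof -
    assume "G * F = 1\<^sub>m N"
    then have "(G * F) $$ (l,l') = 1\<^sub>m N $$ (l,l')" by simp
    then show ?thesis using that by (simp add: F_def G_def scalar_prod_def atLeast0LessThan)
  qed
  have sub: "{\<mu>. eigenvalue (P \<epsilon>) \<mu>} \<subseteq> lam \<epsilon> ` {..<N}"
  proof
    fix \<mu> assume "\<mu> \<in> {\<mu>. eigenvalue (P \<epsilon>) \<mu>}"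
    then obtain v where v: "v \<in> carrier_vec N" "v \<noteq> 0\<^sub>v N" "P \<epsilon> *\<^sub>v v = \<mu> \<cdot>\<^sub>v v"
      by (auto simp: eigenvalue_def eigenvector_def Dmat_def)
    define a where "a l = (\<Sum>i<N. C i l * v $ i)" for l
    have vexp: "v $ i = (\<Sum>l<N. a l * f \<epsilon> l $ i)" if i: "i < N" for i
    proof -
      have "(\<Sum>l<N. a l * f \<epsilon> l $ i) = (\<Sum>i'<N. \<Sum>l<N. C i' l * v $ i' * f \<epsilon> l $ i)"
        unfolding a_def by (rule swap1)
      also have "\<dots> = (\<Sum>i'<N. v $ i' * (\<Sum>l<N. f \<epsilon> l $ i * C i' l))"
        by (intro sum.cong refl) (simp add: sum_distrib_left mult_ac)
      also have "\<dots> = (\<Sum>i'<N. if i = i' then v $ i' else 0)"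
        using i by (intro sum.cong) (auto simp: FG)
      finally show ?thesis using i by simp
    qed
    have Pv: "(\<Sum>l<N. a l * (lam \<epsilon> l - \<mu>) * f \<epsilon> l $ i) = 0" if i: "i < N" for i
    proof -
      have "(P \<epsilon> *\<^sub>v v) $ i = \<mu> * v $ i" using v i by simp
      moreover have "(P \<epsilon> *\<^sub>v v) $ i = d i * (v $ i + complex_of_real \<epsilon> * (\<Sum>j<N. complex_of_real (W $$ (i,j)) * v $ j))"
        using P_apply'[OF v(1) i] .
      moreover have "d i * (v $ i + complex_of_real \<epsilon> * (\<Sum>j<N. complex_of_real (W $$ (i,j)) * v $ j))
          = (\<Sum>l<N. a l * (d i * (f \<epsilon> l $ i + complex_of_real \<epsilon> * (\<Sum>j<N. complex_of_real (W $$ (i,j)) * f \<epsilon> l $ j))))"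
      proof -
        have "(\<Sum>j<N. complex_of_real (W $$ (i,j)) * v $ j) = (\<Sum>j<N. complex_of_real (W $$ (i,j)) * (\<Sum>l<N. a l * f \<epsilon> l $ j))"
          by (intro sum.cong refl) (simp add: vexp)
        also have "\<dots> = (\<Sum>l<N. \<Sum>j<N. complex_of_real (W $$ (i,j)) * (a l * f \<epsilon> l $ j))"
          by (rule swap2)
        also have "\<dots> = (\<Sum>l<N. a l * (\<Sum>j<N. complex_of_real (W $$ (i,j)) * f \<epsilon> l $ j))"
          by (intro sum.cong refl) (simp add: sum_distrib_left mult_ac)
        finally have X: "(\<Sum>j<N. complex_of_real (W $$ (i,j)) * v $ j) = (\<Sum>l<N. a l * (\<Sum>j<N. complex_of_real (W $$ (i,j)) * f \<epsilon> l $ j))" .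
        show ?thesis unfolding X vexp[OF i]
          by (simp add: sum_distrib_left sum.distrib distrib_left mult_ac)
      qed
      moreover have "\<dots> = (\<Sum>l<N. a l * lam \<epsilon> l * f \<epsilon> l $ i)"
        using eq_comp[OF e _ i] by (intro sum.cong) (auto simp: mult.assoc)
      ultimately have "(\<Sum>l<N. a l * lam \<epsilon> l * f \<epsilon> l $ i) = \<mu> * (\<Sum>l<N. a l * f \<epsilon> l $ i)"
        using vexp[OF i] by simp
      then show ?thesis by (simp add: algebra_simps sum_subtractf sum_distrib_left)
    qed
    have "\<exists>l<N. a l \<noteq> 0"
    proof (rule ccontr)
      assume "\<not> ?thesis"
      then have "\<forall>i<N. v $ i = 0" using vexp by auto
      then have "v = 0\<^sub>v N" using v(1) by (intro eq_vecI) auto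
      then show False using v(2) by simp
    qed
    then obtain l0 where l0: "l0 < N" "a l0 \<noteq> 0" by blast
    have "(\<Sum>i<N. C i l0 * (\<Sum>l<N. a l * (lam \<epsilon> l - \<mu>) * f \<epsilon> l $ i)) = 0"
      using Pv by simp
    moreover have "(\<Sum>i<N. C i l0 * (\<Sum>l<N. a l * (lam \<epsilon> l - \<mu>) * f \<epsilon> l $ i))
        = (\<Sum>l<N. \<Sum>i<N. C i l0 * (a l * (lam \<epsilon> l - \<mu>) * f \<epsilon> l $ i))"
      by (rule swap2)
    moreover have "\<dots> = (\<Sum>l<N. a l * (lam \<epsilon> l - \<mu>) * (\<Sum>i<N. C i l0 * f \<epsilon> l $ i))"
      by (intro sum.cong refl) (simp add: sum_distrib_left mult_ac)
    moreover have "\<dots> = (\<Sum>l<N. if l0 = l then a l * (lam \<epsilon> l - \<mu>) else 0)"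
      using l0 by (intro sum.cong refl) (simp add: GF)
    moreover have "\<dots> = a l0 * (lam \<epsilon> l0 - \<mu>)"
      using l0 by simp
    ultimately have "lam \<epsilon> l0 = \<mu>" using l0 by simp
    then show "\<mu> \<in> lam \<epsilon> ` {..<N}" using l0 by auto
  qed
  have "N \<le> card (lam \<epsilon> ` {..<N})"
    using card_mono[OF _ sub] distinct_ev e by auto
  moreover have "card (lam \<epsilon> ` {..<N}) \<le> N" using card_image_le[of "{..<N}" "lam \<epsilon>"] by simp
  ultimately show ?thesis by (intro eq_card_imp_inj_on) auto
qed

end


definition spec_ok :: "nat \<Rightarrow> (nat \<Rightarrow> nat \<Rightarrow> real) \<Rightarrow> (nat \<Rightarrow> real) \<Rightarrow> (nat \<Rightarrow> nat \<Rightarrow> real) \<Rightarrow> bool" where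
  "spec_ok n a \<nu> r \<longleftrightarrow> (\<forall>q<n. \<forall>p<n. \<nu> q = \<nu> p \<longrightarrow> q = p) \<and>
     (\<forall>q<n. \<forall>i<n. (\<Sum>j<n. a i j * r q j) = \<nu> q * r q i) \<and>
     (\<forall>q<n. \<forall>p<n. (\<Sum>j<n. r q j * r p j) = (if q = p then 1 else 0)) \<and>
     (\<forall>i<n. \<forall>j<n. (\<Sum>q<n. r q i * r q j) = (if i = j then 1 else 0))"

context setup4
begin

lemma ev_right: "eventually (\<lambda>\<epsilon>. \<epsilon> \<in> {0<..<\<gamma>}) (at_right 0)"
  unfolding eventually_at_right_field using \<gamma> by auto

lemma off_decay:
  assumes s: "s < length L" and l: "l \<in> block L s" and i: "i < N" "i \<notin> block L s"
  shows "((\<lambda>\<epsilon>. f \<epsilon> l $ i) \<longlongrightarrow> 0) (at_right 0)"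
proof -
  define t where "t = blk L i"
  have t: "t < length L" "i \<in> block L t" using blk[OF i(1)] by (auto simp: t_def)
  have ts: "t \<noteq> s" using t i by auto
  have lN: "l < N" using block_sub[OF s] l by auto
  have pd: "ph s - ph t \<noteq> 0" using phase_distinct[OF s t(1)] ts by auto
  define K where "K = (\<Sum>j<N. \<bar>W $$ (i,j)\<bar>)"
  have limd: "((\<lambda>\<epsilon>. cmod (lam \<epsilon> l - d i)) \<longlongrightarrow> cmod (ph s - ph t)) (at_right 0)"
    using lim s l by (auto simp: t_def intro!: tendsto_intros)
  have evne: "eventually (\<lambda>\<epsilon>. cmod (lam \<epsilon> l - d i) > 0) (at_right 0)"
  proof -
    have "0 < cmod (ph s - ph t)" using pd by simp
    then show ?thesis by (rule order_tendstoD(1)[OF limd])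
  qed
  have bound: "eventually (\<lambda>\<epsilon>. cmod (f \<epsilon> l $ i) \<le> \<epsilon> * K / cmod (lam \<epsilon> l - d i)) (at_right 0)"
    using evne ev_right
  proof eventually_elim
    case (elim \<epsilon>)
    define X where "X = (\<Sum>j<N. complex_of_real (W $$ (i,j)) * f \<epsilon> l $ j)"
    have eq: "d i * (f \<epsilon> l $ i + complex_of_real \<epsilon> * X) = lam \<epsilon> l * f \<epsilon> l $ i"
      using eq_comp[OF elim(2) lN i(1)] by (simp add: X_def)
    then have "(lam \<epsilon> l - d i) * f \<epsilon> l $ i = d i * complex_of_real \<epsilon> * X"
      by (simp add: algebra_simps)
    then have "cmod ((lam \<epsilon> l - d i) * f \<epsilon> l $ i) = cmod (d i * complex_of_real \<epsilon> * X)" by simp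
    then have "cmod (lam \<epsilon> l - d i) * cmod (f \<epsilon> l $ i) = \<epsilon> * cmod X"
      using elim by (simp only: norm_mult norm_phase norm_of_real) simp
    moreover have "cmod X \<le> K"
    proof -
      have "cmod X \<le> (\<Sum>j<N. cmod (complex_of_real (W $$ (i,j)) * f \<epsilon> l $ j))"
        unfolding X_def by (rule norm_sum)
      also have "\<dots> \<le> (\<Sum>j<N. \<bar>W $$ (i,j)\<bar>)"
      proof (intro sum_mono)
        fix j assume "j \<in> {..<N}"
        then have "cmod (f \<epsilon> l $ j) \<le> 1" using fbound[OF elim(2) lN] by auto
        then show "cmod (complex_of_real (W $$ (i,j)) * f \<epsilon> l $ j) \<le> \<bar>W $$ (i,j)\<bar>"
          by (simp add: norm_mult mult_left_le)
      qed
      finally show ?thesis by (simp add: K_def)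
    qed
    ultimately have "cmod (lam \<epsilon> l - d i) * cmod (f \<epsilon> l $ i) \<le> \<epsilon> * K"
      using elim by (metis mult_left_mono less_imp_le greaterThanLessThan_iff)
    then show ?case using elim by (simp add: field_simps)
  qed
  have "((\<lambda>\<epsilon>. \<epsilon> * K / cmod (lam \<epsilon> l - d i)) \<longlongrightarrow> 0 * K / cmod (ph s - ph t)) (at_right 0)"
    by (intro tendsto_intros limd) (use pd in auto)
  then have "((\<lambda>\<epsilon>. cmod (f \<epsilon> l $ i)) \<longlongrightarrow> 0) (at_right 0)"
    by (intro tendsto_sandwich[of "\<lambda>_. 0" "\<lambda>\<epsilon>. cmod (f \<epsilon> l $ i)" _ "\<lambda>\<epsilon>. \<epsilon> * K / cmod (lam \<epsilon> l - d i)", OF _ bound]) auto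
  then show ?thesis by (rule tendsto_norm_zero_cancel)
qed

lemma Npre_lt: "s < length L \<Longrightarrow> j < L ! s \<Longrightarrow> Npre L s + j < N"
proof -
  assume a: "s < length L" "j < L ! s"
  then have "Npre L s + j \<in> block L s" by (simp add: block_eq)
  then show ?thesis using block_sub[OF a(1)] by auto
qed

lemma Npre_in: "s < length L \<Longrightarrow> j < L ! s \<Longrightarrow> Npre L s + j \<in> block L s"
  by (auto simp: block_eq)

lemma gersh:
  assumes s: "s < length L"
    and eq: "\<forall>i<L!s. (\<Sum>j<L!s. W $$ (Npre L s + i, Npre L s + j) * x j) = \<mu> * x i"
    and nz: "\<exists>j<L!s. x j \<noteq> 0"
  shows "\<mu> \<le> 0"
proof -
  define n where "n = L ! s"
  define M where "M = Max ((\<lambda>j. \<bar>x j\<bar>) ` {..<n})"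
  have ne: "{..<n} \<noteq> {}" using nz n_def by auto
  have "M \<in> (\<lambda>j. \<bar>x j\<bar>) ` {..<n}" unfolding M_def using ne by (intro Max_in) auto
  then obtain i where i: "i < n" "\<bar>x i\<bar> = M" by auto
  have Mge: "\<bar>x j\<bar> \<le> M" if "j < n" for j unfolding M_def using that by (intro Max_ge) auto
  have Mpos: "M > 0"
  proof -
    obtain j where j: "j < n" "x j \<noteq> 0" using nz n_def by auto
    then have "0 < \<bar>x j\<bar>" by simp
    also have "\<dots> \<le> M" using Mge j by simp
    finally show ?thesis .
  qed
  define I where "I = Npre L s + i"
  have IN: "I < N" using Npre_lt[OF s] i n_def by (simp add: I_def)
  have offnn: "\<forall>i<N. \<forall>j<N. i \<noteq> j \<longrightarrow> W $$ (i,j) \<ge> 0" and rows: "\<forall>i<N. (\<Sum>j<N. W $$ (i,j)) = 0"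
    using W by (auto simp: admissible_def)
  have row: "W $$ (I,I) + (\<Sum>m\<in>{..<N} - {I}. W $$ (I,m)) = 0"
    using rows IN by (simp add: sum.remove[of "{..<N}" I])
  have e1: "W $$ (I,I) * x i + (\<Sum>j\<in>{..<n} - {i}. W $$ (I, Npre L s + j) * x j) = \<mu> * x i"
  proof -
    have "(\<Sum>j<n. W $$ (I, Npre L s + j) * x j) = \<mu> * x i" using eq i n_def by (simp add: I_def)
    moreover have "(\<Sum>j<n. W $$ (I, Npre L s + j) * x j) = W $$ (I, Npre L s + i) * x i + (\<Sum>j\<in>{..<n} - {i}. W $$ (I, Npre L s + j) * x j)"
      using i by (intro sum.remove) auto
    ultimately show ?thesis by (simp add: I_def)
  qed
  have "\<bar>\<Sum>j\<in>{..<n} - {i}. W $$ (I, Npre L s + j) * x j\<bar> \<le> (\<Sum>j\<in>{..<n} - {i}. W $$ (I, Npre L s + j) * M)"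
  proof -
    have "\<bar>\<Sum>j\<in>{..<n} - {i}. W $$ (I, Npre L s + j) * x j\<bar> \<le> (\<Sum>j\<in>{..<n} - {i}. \<bar>W $$ (I, Npre L s + j) * x j\<bar>)"
      by (rule sum_abs)
    also have "\<dots> \<le> (\<Sum>j\<in>{..<n} - {i}. W $$ (I, Npre L s + j) * M)"
    proof (intro sum_mono)
      fix j assume j: "j \<in> {..<n} - {i}"
      have nn: "W $$ (I, Npre L s + j) \<ge> 0" using offnn IN Npre_lt[OF s, of j] j n_def by (auto simp: I_def)
      show "\<bar>W $$ (I, Npre L s + j) * x j\<bar> \<le> W $$ (I, Npre L s + j) * M"
        using nn Mge[of j] j by (simp add: abs_mult mult_left_mono)
    qed
    finally show ?thesis .
  qed
  also have "\<dots> = M * (\<Sum>j\<in>{..<n} - {i}. W $$ (I, Npre L s + j))" by (simp add: sum_distrib_left mult.commute)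
  finally have b1: "\<bar>\<Sum>j\<in>{..<n} - {i}. W $$ (I, Npre L s + j) * x j\<bar> \<le> M * (\<Sum>j\<in>{..<n} - {i}. W $$ (I, Npre L s + j))" .
  have "(\<Sum>j\<in>{..<n} - {i}. W $$ (I, Npre L s + j)) = (\<Sum>m\<in>(\<lambda>j. Npre L s + j) ` ({..<n} - {i}). W $$ (I, m))"
    by (subst sum.reindex) (auto simp: inj_on_def)
  also have "\<dots> \<le> (\<Sum>m\<in>{..<N} - {I}. W $$ (I, m))"
  proof (intro sum_mono2)
    show "(\<lambda>j. Npre L s + j) ` ({..<n} - {i}) \<subseteq> {..<N} - {I}"
      using Npre_lt[OF s] n_def by (auto simp: I_def)
    fix m assume "m \<in> {..<N} - {I} - (\<lambda>j. Npre L s + j) ` ({..<n} - {i})"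
    then show "0 \<le> W $$ (I, m)" using offnn IN by auto
  qed auto
  finally have b2: "(\<Sum>j\<in>{..<n} - {i}. W $$ (I, Npre L s + j)) \<le> - W $$ (I,I)" using row by simp
  have "(\<mu> - W $$ (I,I)) * x i = (\<Sum>j\<in>{..<n} - {i}. W $$ (I, Npre L s + j) * x j)"
    using e1 by (simp add: algebra_simps)
  then have "\<bar>(\<mu> - W $$ (I,I)) * x i\<bar> \<le> M * (- W $$ (I,I))"
    using b1 mult_left_mono[OF b2, of M] Mpos by simp
  then have "\<bar>\<mu> - W $$ (I,I)\<bar> * M \<le> (- W $$ (I,I)) * M" using i by (simp add: abs_mult mult.commute)
  then have "\<bar>\<mu> - W $$ (I,I)\<bar> * M \<le> (- W $$ (I,I)) * M" by simp
  then have "\<bar>\<mu> - W $$ (I,I)\<bar> \<le> - W $$ (I,I)" using Mpos mult_le_cancel_right_pos by blast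
  then show ?thesis by linarith
qed

lemma block_spec:
  assumes s: "s < length L"
  shows "\<exists>\<nu> r. spec_ok (L!s) (\<lambda>i j. W $$ (Npre L s + i, Npre L s + j)) \<nu> r \<and> (\<forall>q<L!s. \<nu> q \<le> 0)"
proof -
  define A where "A = Wblock L W s"
  have idx: "A $$ (i,j) = W $$ (Npre L s + i, Npre L s + j)" if "i < L!s" "j < L!s" for i j
    using that by (simp add: A_def Wblock_def)
  have Ac: "A \<in> carrier_mat (L!s) (L!s)" by (simp add: A_def Wblock_def)
  have sym: "\<forall>i<L!s. \<forall>j<L!s. A$$(i,j) = A$$(j,i)"
    using idx Wsym Npre_lt[OF s] by auto
  have card: "card {\<mu>. eigenvalue A \<mu>} = L!s" using W s by (simp add: admissible_def A_def)
  obtain \<nu> r where dist: "\<forall>q<L!s. \<forall>p<L!s. \<nu> q = \<nu> p \<longrightarrow> q = p"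
    and eig: "\<forall>q<L!s. \<forall>i<L!s. (\<Sum>j<L!s. A$$(i,j) * r q j) = \<nu> q * r q i"
    and on: "\<forall>q<L!s. \<forall>p<L!s. (\<Sum>j<L!s. r q j * r p j) = (if q = p then 1 else 0)"
    and comp: "\<forall>i<L!s. \<forall>j<L!s. (\<Sum>q<L!s. r q i * r q j) = (if i = j then 1 else 0)"
    using spectral[OF Ac sym card] by blast
  have eig': "\<forall>q<L!s. \<forall>i<L!s. (\<Sum>j<L!s. W $$ (Npre L s + i, Npre L s + j) * r q j) = \<nu> q * r q i"
    using eig idx by simp
  have neg: "\<nu> q \<le> 0" if q: "q < L!s" for q
  proof (rule gersh[OF s])
    show "\<forall>i<L!s. (\<Sum>j<L!s. W $$ (Npre L s + i, Npre L s + j) * r q j) = \<nu> q * r q i" using eig' q by blast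
    show "\<exists>j<L!s. r q j \<noteq> 0"
    proof (rule ccontr)
      assume "\<not> ?thesis"
      then have "(\<Sum>j<L!s. r q j * r q j) = 0" by simp
      then show False using on q by auto
    qed
  qed
  show ?thesis unfolding spec_ok_def using dist eig' on comp neg by blast
qed

end


context setup4
begin

lemma per_l:
  assumes s: "s < length L" and l: "l \<in> block L s"
    and sp: "spec_ok (L!s) (\<lambda>i j. W $$ (Npre L s + i, Npre L s + j)) \<nu> r"
  shows "\<exists>q<L!s. ((\<lambda>\<epsilon>. (lam \<epsilon> l - ph s) / (complex_of_real \<epsilon> * ph s)) \<longlongrightarrow> complex_of_real (\<nu> q)) (at_right 0) \<and>
    (\<exists>z. (\<forall>\<epsilon>. cmod (z \<epsilon>) = 1) \<and>
      ((\<lambda>\<epsilon>. \<Sum>j<L!s. (cmod (f \<epsilon> l $ (Npre L s + j) - z \<epsilon> * complex_of_real (r q j)))\<^sup>2) \<longlongrightarrow> 0) (at_right 0))"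
proof -
  define n where "n = L ! s"
  define \<kappa> where "\<kappa> \<epsilon> = (lam \<epsilon> l - ph s) / (complex_of_real \<epsilon> * ph s)" for \<epsilon>
  define u where "u \<epsilon> j = f \<epsilon> l $ (Npre L s + j)" for \<epsilon> j
  define off where "off = {..<N} - block L s"
  have lN: "l < N" using block_sub[OF s] l by auto
  have n0: "0 < n" using L s by (simp add: bandwidth_vector_def n_def)
  have within: "(\<Sum>j'<n. complex_of_real (W $$ (Npre L s + j, Npre L s + j')) * u \<epsilon> j') - \<kappa> \<epsilon> * u \<epsilon> j
      = - (\<Sum>i\<in>off. complex_of_real (W $$ (Npre L s + j, i)) * f \<epsilon> l $ i)"
    if e: "\<epsilon> \<in> {0<..<\<gamma>}" and j: "j < n" for \<epsilon> j
  proof -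
    define I0 where "I0 = Npre L s + j"
    have I0: "I0 < N" "blk L I0 = s" using Npre_lt[OF s] Npre_in[OF s] blk_eq[OF s] j n_def by (auto simp: I0_def)
    define X where "X = (\<Sum>m<N. complex_of_real (W $$ (I0,m)) * f \<epsilon> l $ m)"
    have eq: "ph s * (f \<epsilon> l $ I0 + complex_of_real \<epsilon> * X) = lam \<epsilon> l * f \<epsilon> l $ I0"
      using eq_comp[OF e lN I0(1)] I0 by (simp add: X_def)
    have nz: "complex_of_real \<epsilon> * ph s \<noteq> 0" using e phase_nz by auto
    have "X = \<kappa> \<epsilon> * f \<epsilon> l $ I0"
    proof -
      have "(complex_of_real \<epsilon> * ph s) * X = (lam \<epsilon> l - ph s) * f \<epsilon> l $ I0"
        using eq by (simp add: algebra_simps)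
      then show ?thesis unfolding \<kappa>_def using nz by (simp add: field_simps)
    qed
    moreover have "X = (\<Sum>j'<n. complex_of_real (W $$ (Npre L s + j, Npre L s + j')) * u \<epsilon> j')
        + (\<Sum>i\<in>off. complex_of_real (W $$ (Npre L s + j, i)) * f \<epsilon> l $ i)"
      unfolding X_def off_def u_def n_def I0_def by (rule sum_split_block[OF s])
    ultimately show ?thesis by (simp add: u_def I0_def algebra_simps eq_neg_iff_add_eq_0)
  qed
  have offdec: "((\<lambda>\<epsilon>. f \<epsilon> l $ i) \<longlongrightarrow> 0) (at_right 0)" if "i \<in> off" for i
    using off_decay[OF s l] that by (auto simp: off_def)
  have v0: "\<forall>j<n. ((\<lambda>\<epsilon>. (\<Sum>j'<n. complex_of_real (W $$ (Npre L s + j, Npre L s + j')) * u \<epsilon> j') - \<kappa> \<epsilon> * u \<epsilon> j) \<longlongrightarrow> 0) (at_right 0)"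
  proof (intro allI impI)
    fix j assume j: "j < n"
    have "((\<lambda>\<epsilon>. - (\<Sum>i\<in>off. complex_of_real (W $$ (Npre L s + j, i)) * f \<epsilon> l $ i)) \<longlongrightarrow> - 0) (at_right 0)"
    proof (intro tendsto_minus tendsto_null_sum)
      fix i assume "i \<in> off"
      from tendsto_mult[OF tendsto_const offdec[OF this], of "complex_of_real (W $$ (Npre L s + j, i))"]
      show "((\<lambda>\<epsilon>. complex_of_real (W $$ (Npre L s + j, i)) * f \<epsilon> l $ i) \<longlongrightarrow> 0) (at_right 0)" by simp
    qed
    then show "((\<lambda>\<epsilon>. (\<Sum>j'<n. complex_of_real (W $$ (Npre L s + j, Npre L s + j')) * u \<epsilon> j') - \<kappa> \<epsilon> * u \<epsilon> j) \<longlongrightarrow> 0) (at_right 0)"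
    proof -
      assume T: "((\<lambda>\<epsilon>. - (\<Sum>i\<in>off. complex_of_real (W $$ (Npre L s + j, i)) * f \<epsilon> l $ i)) \<longlongrightarrow> - 0) (at_right 0)"
      have E: "eventually (\<lambda>\<epsilon>. - (\<Sum>i\<in>off. complex_of_real (W $$ (Npre L s + j, i)) * f \<epsilon> l $ i)
          = (\<Sum>j'<n. complex_of_real (W $$ (Npre L s + j, Npre L s + j')) * u \<epsilon> j') - \<kappa> \<epsilon> * u \<epsilon> j) (at_right 0)"
        using ev_right by eventually_elim (use within j in auto)
      show ?thesis using Lim_transform_eventually[OF T E] by simp
    qed
  qed
  have u1: "((\<lambda>\<epsilon>. \<Sum>j<n. (cmod (u \<epsilon> j))\<^sup>2) \<longlongrightarrow> 1) (at_right 0)"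
  proof -
    have "((\<lambda>\<epsilon>. 1 - (\<Sum>i\<in>off. (cmod (f \<epsilon> l $ i))\<^sup>2)) \<longlongrightarrow> 1 - 0) (at_right 0)"
    proof (intro tendsto_diff tendsto_const tendsto_null_sum)
      fix i assume "i \<in> off"
      from tendsto_power[OF tendsto_norm_zero[OF offdec[OF this]], of 2]
      show "((\<lambda>\<epsilon>. (cmod (f \<epsilon> l $ i))\<^sup>2) \<longlongrightarrow> 0) (at_right 0)" by simp
    qed
    moreover have "eventually (\<lambda>\<epsilon>. 1 - (\<Sum>i\<in>off. (cmod (f \<epsilon> l $ i))\<^sup>2) = (\<Sum>j<n. (cmod (u \<epsilon> j))\<^sup>2)) (at_right 0)"
      using ev_right
    proof eventually_elim
      case (elim \<epsilon>)
      have "(\<Sum>i<N. (cmod (f \<epsilon> l $ i))\<^sup>2) = (\<Sum>j<n. (cmod (u \<epsilon> j))\<^sup>2) + (\<Sum>i\<in>off. (cmod (f \<epsilon> l $ i))\<^sup>2)"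
        unfolding u_def off_def n_def by (rule sum_split_block[OF s])
      then show ?case using fsum1[OF elim lN] by simp
    qed
    ultimately show ?thesis using Lim_transform_eventually by fastforce
  qed
  have cont\<kappa>: "continuous_on {0<..<\<gamma>} \<kappa>"
    unfolding \<kappa>_def using cont lN phase_nz
    by (intro continuous_intros) auto
  have sp': "(\<forall>q<n. \<forall>p<n. \<nu> q = \<nu> p \<longrightarrow> q = p)"
    "\<forall>q<n. \<forall>i<n. (\<Sum>j<n. W $$ (Npre L s + i, Npre L s + j) * r q j) = \<nu> q * r q i"
    "\<forall>q<n. \<forall>p<n. (\<Sum>j<n. r q j * r p j) = (if q = p then 1 else 0)"
    "\<forall>i<n. \<forall>j<n. (\<Sum>q<n. r q i * r q j) = (if i = j then 1 else 0)"
    using sp unfolding spec_ok_def n_def by auto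
  have symm: "\<forall>i<n. \<forall>j<n. W $$ (Npre L s + i, Npre L s + j) = W $$ (Npre L s + j, Npre L s + i)"
    using Wsym Npre_lt[OF s] n_def by auto
  from converge_core[OF n0 sp'(1) sp'(2) symm sp'(3) sp'(4) \<gamma> cont\<kappa> v0 u1]
  show ?thesis unfolding \<kappa>_def u_def n_def by blast
qed

end


lemma arg_neg:
  assumes p: "p \<noteq> 0" and v: "(v::real) < 0"
  shows "\<exists>m::int. Arg (p * complex_of_real v) = Arg p + pi + 2 * pi * of_int m"
proof -
  have sg: "sgn (p * complex_of_real v) = cis (Arg p + pi)"
  proof -
    have "sgn (p * complex_of_real v) = sgn p * complex_of_real (sgn v)" by (simp add: sgn_mult sgn_of_real)
    also have "\<dots> = - sgn p" using v by simp
    also have "sgn p = cis (Arg p)" using cis_Arg[OF p] by simp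
    finally show ?thesis by (simp flip: cis_mult)
  qed
  have b: "- pi < Arg p" "Arg p \<le> pi" using Arg_bounded by auto
  show ?thesis
  proof (cases "Arg p \<le> 0")
    case True
    have "Arg (p * complex_of_real v) = Arg p + pi"
      by (rule cis_Arg_unique) (use sg b True in auto)
    then show ?thesis by (intro exI[of _ 0]) simp
  next
    case False
    have "cis (Arg p - pi) = cis (Arg p + pi)"
    proof -
      have "cis (Arg p + pi) / cis (2 * pi) = cis (Arg p + pi - 2 * pi)" by (rule cis_divide)
      moreover have "Arg p + pi - 2 * pi = Arg p - pi" by simp
      ultimately show ?thesis by simp
    qed
    then have "Arg (p * complex_of_real v) = Arg p - pi"
      by (intro cis_Arg_unique) (use sg b False in auto)
    then show ?thesis by (intro exI[of _ "-1"]) simp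
  qed
qed

lemma unit_exp:
  assumes "cmod z = 1"
  shows "\<exists>\<theta>\<in>{0..<2*pi}. exp (\<i> * complex_of_real \<theta>) = z"
proof -
  have z0: "z \<noteq> 0" using assms by auto
  have c: "cis (Arg z) = z" using cis_Arg[OF z0] assms by (simp add: sgn_div_norm)
  have b: "- pi < Arg z" "Arg z \<le> pi" using Arg_bounded by auto
  show ?thesis
  proof (cases "Arg z \<ge> 0")
    case True
    then show ?thesis using b c by (intro bexI[of _ "Arg z"]) (auto simp: cis_conv_exp mult.commute)
  next
    case False
    have "cis (Arg z + 2 * pi) = cis (Arg z)" by (simp flip: cis_mult)
    then show ?thesis using b c False by (intro bexI[of _ "Arg z + 2 * pi"]) (auto simp: cis_conv_exp mult.commute)
  qed
qed

lemma comp_tendsto_from_sum: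
  fixes e :: "real \<Rightarrow> nat \<Rightarrow> complex"
  assumes "((\<lambda>\<epsilon>. \<Sum>j<n. (cmod (e \<epsilon> j))\<^sup>2) \<longlongrightarrow> 0) F" and j: "j < n"
  shows "((\<lambda>\<epsilon>. cmod (e \<epsilon> j)) \<longlongrightarrow> 0) F"
proof (rule tendsto_sandwich[of "\<lambda>_. 0" _ _ "\<lambda>\<epsilon>. sqrt (\<Sum>j<n. (cmod (e \<epsilon> j))\<^sup>2)"])
  show "eventually (\<lambda>\<epsilon>. 0 \<le> cmod (e \<epsilon> j)) F" by simp
  show "eventually (\<lambda>\<epsilon>. cmod (e \<epsilon> j) \<le> sqrt (\<Sum>j<n. (cmod (e \<epsilon> j))\<^sup>2)) F"
  proof (intro always_eventually allI)
    fix \<epsilon>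
    have "(cmod (e \<epsilon> j))\<^sup>2 \<le> (\<Sum>j<n. (cmod (e \<epsilon> j))\<^sup>2)" using j by (intro member_le_sum) auto
    then show "cmod (e \<epsilon> j) \<le> sqrt (\<Sum>j<n. (cmod (e \<epsilon> j))\<^sup>2)" by (rule real_le_rsqrt)
  qed
  show "((\<lambda>_. 0) \<longlongrightarrow> (0::real)) F" by simp
  show "((\<lambda>\<epsilon>. sqrt (\<Sum>j<n. (cmod (e \<epsilon> j))\<^sup>2)) \<longlongrightarrow> 0) F"
    using tendsto_real_sqrt[OF assms(1)] by simp
qed

context setup4
begin

lemma Y_sym:
  "(\<Sum>i<N. x i * (\<Sum>j<N. complex_of_real (W $$ (i,j)) * y j)) = (\<Sum>i<N. y i * (\<Sum>j<N. complex_of_real (W $$ (i,j)) * x j))"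
proof -
  have "(\<Sum>i<N. x i * (\<Sum>j<N. complex_of_real (W $$ (i,j)) * y j)) = (\<Sum>i<N. \<Sum>j<N. x i * complex_of_real (W $$ (i,j)) * y j)"
    by (simp add: sum_distrib_left mult.assoc)
  also have "\<dots> = (\<Sum>j<N. \<Sum>i<N. x i * complex_of_real (W $$ (i,j)) * y j)" by (rule sum.swap)
  also have "\<dots> = (\<Sum>j<N. \<Sum>i<N. y j * (complex_of_real (W $$ (j,i)) * x i))"
    using Wsym by (intro sum.cong refl) (simp add: mult_ac)
  also have "\<dots> = (\<Sum>i<N. y i * (\<Sum>j<N. complex_of_real (W $$ (i,j)) * x j))"
    by (simp add: sum_distrib_left)
  finally show ?thesis .
qed

lemma B_zero:
  assumes e: "\<epsilon> \<in> {0<..<\<gamma>}" and l: "l < N" and m: "m < N" and lm: "l \<noteq> m"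
  shows "(\<Sum>i<N. f \<epsilon> m $ i * f \<epsilon> l $ i / d i) = 0"
proof -
  define B where "B = (\<Sum>i<N. f \<epsilon> m $ i * f \<epsilon> l $ i / d i)"
  have key: "(\<Sum>i<N. f \<epsilon> b $ i * f \<epsilon> a $ i) + complex_of_real \<epsilon> * (\<Sum>i<N. f \<epsilon> b $ i * (\<Sum>j<N. complex_of_real (W $$ (i,j)) * f \<epsilon> a $ j))
      = lam \<epsilon> a * (\<Sum>i<N. f \<epsilon> b $ i * f \<epsilon> a $ i / d i)" if a: "a < N" for a b
  proof -
    have "f \<epsilon> b $ i * f \<epsilon> a $ i + complex_of_real \<epsilon> * (f \<epsilon> b $ i * (\<Sum>j<N. complex_of_real (W $$ (i,j)) * f \<epsilon> a $ j))
       = lam \<epsilon> a * (f \<epsilon> b $ i * f \<epsilon> a $ i / d i)" if i: "i < N" for i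
    proof -
      have "d i * (f \<epsilon> a $ i + complex_of_real \<epsilon> * (\<Sum>j<N. complex_of_real (W $$ (i,j)) * f \<epsilon> a $ j)) = lam \<epsilon> a * f \<epsilon> a $ i"
        by (rule eq_comp[OF e a i])
      then have "f \<epsilon> a $ i + complex_of_real \<epsilon> * (\<Sum>j<N. complex_of_real (W $$ (i,j)) * f \<epsilon> a $ j) = lam \<epsilon> a * f \<epsilon> a $ i / d i"
        using phase_nz by (simp add: field_simps)
      then have "f \<epsilon> b $ i * (f \<epsilon> a $ i + complex_of_real \<epsilon> * (\<Sum>j<N. complex_of_real (W $$ (i,j)) * f \<epsilon> a $ j)) = f \<epsilon> b $ i * (lam \<epsilon> a * f \<epsilon> a $ i / d i)"
        by (rule arg_cong)
      then show ?thesis by (simp add: distrib_left mult_ac)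
    qed
    then have "(\<Sum>i<N. f \<epsilon> b $ i * f \<epsilon> a $ i + complex_of_real \<epsilon> * (f \<epsilon> b $ i * (\<Sum>j<N. complex_of_real (W $$ (i,j)) * f \<epsilon> a $ j)))
       = (\<Sum>i<N. lam \<epsilon> a * (f \<epsilon> b $ i * f \<epsilon> a $ i / d i))" by (intro sum.cong) auto
    then show ?thesis by (simp add: sum.distrib sum_distrib_left)
  qed
  have k1: "(\<Sum>i<N. f \<epsilon> m $ i * f \<epsilon> l $ i) + complex_of_real \<epsilon> * (\<Sum>i<N. f \<epsilon> m $ i * (\<Sum>j<N. complex_of_real (W $$ (i,j)) * f \<epsilon> l $ j)) = lam \<epsilon> l * B"
    using key[OF l, of m] by (simp add: B_def)
  have k2: "(\<Sum>i<N. f \<epsilon> l $ i * f \<epsilon> m $ i) + complex_of_real \<epsilon> * (\<Sum>i<N. f \<epsilon> l $ i * (\<Sum>j<N. complex_of_real (W $$ (i,j)) * f \<epsilon> m $ j)) = lam \<epsilon> m * B"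
    using key[OF m, of l] by (simp add: B_def mult.commute)
  have "lam \<epsilon> l * B = lam \<epsilon> m * B"
  proof -
    have "(\<Sum>i<N. f \<epsilon> m $ i * f \<epsilon> l $ i) = (\<Sum>i<N. f \<epsilon> l $ i * f \<epsilon> m $ i)" by (simp add: mult.commute)
    then show ?thesis using k1 k2 Y_sym[of "\<lambda>i. f \<epsilon> m $ i" "\<lambda>i. f \<epsilon> l $ i"] by metis
  qed
  moreover have "lam \<epsilon> l \<noteq> lam \<epsilon> m" using lam_inj[OF e] l m lm by (auto simp: inj_on_def)
  ultimately show ?thesis unfolding B_def by simp
qed

lemma no_collision:
  assumes s: "s < length L" and l: "l \<in> block L s" and m: "m \<in> block L s" and lm: "l \<noteq> m"
    and on1: "(\<Sum>j<L!s. r j * r j) = 1"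
    and zl: "\<forall>\<epsilon>. cmod (zl \<epsilon>) = 1"
    and cl: "((\<lambda>\<epsilon>. \<Sum>j<L!s. (cmod (f \<epsilon> l $ (Npre L s + j) - zl \<epsilon> * complex_of_real (r j)))\<^sup>2) \<longlongrightarrow> 0) (at_right 0)"
    and zm: "\<forall>\<epsilon>. cmod (zm \<epsilon>) = 1"
    and cm: "((\<lambda>\<epsilon>. \<Sum>j<L!s. (cmod (f \<epsilon> m $ (Npre L s + j) - zm \<epsilon> * complex_of_real (r j)))\<^sup>2) \<longlongrightarrow> 0) (at_right 0)"
  shows False
proof -
  define n where "n = L ! s"
  define off where "off = {..<N} - block L s"
  have lN: "l < N" and mN: "m < N" using block_sub[OF s] l m by auto
  have rb: "\<bar>r j\<bar> \<le> 1" if j: "j < n" for j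
  proof -
    have "(r j)\<^sup>2 \<le> (\<Sum>j<n. r j * r j)" using j by (simp add: power2_eq_square) (intro member_le_sum, auto)
    then have "(r j)\<^sup>2 \<le> 1\<^sup>2" using on1 n_def by simp
    then show ?thesis using abs_le_square_iff[of "r j" 1] by simp
  qed
  define el where "el \<epsilon> j = cmod (f \<epsilon> l $ (Npre L s + j) - zl \<epsilon> * complex_of_real (r j))" for \<epsilon> j
  define em where "em \<epsilon> j = cmod (f \<epsilon> m $ (Npre L s + j) - zm \<epsilon> * complex_of_real (r j))" for \<epsilon> j
  have el0: "((\<lambda>\<epsilon>. el \<epsilon> j) \<longlongrightarrow> 0) (at_right 0)" if "j < n" for j
    unfolding el_def using comp_tendsto_from_sum[OF cl] that n_def by simp
  have em0: "((\<lambda>\<epsilon>. em \<epsilon> j) \<longlongrightarrow> 0) (at_right 0)" if "j < n" for j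
    unfolding em_def using comp_tendsto_from_sum[OF cm] that n_def by simp
  define RHS where "RHS \<epsilon> = (\<Sum>j<n. em \<epsilon> j + el \<epsilon> j) + (\<Sum>i\<in>off. cmod (f \<epsilon> l $ i))" for \<epsilon>
  have RHS0: "(RHS \<longlongrightarrow> 0) (at_right 0)"
  proof -
    have "((\<lambda>\<epsilon>. (\<Sum>j<n. em \<epsilon> j + el \<epsilon> j) + (\<Sum>i\<in>off. cmod (f \<epsilon> l $ i))) \<longlongrightarrow> 0 + 0) (at_right 0)"
    proof (intro tendsto_add tendsto_null_sum)
      fix j assume "j \<in> {..<n}"
      then have jn: "j < n" by simp
      show "((\<lambda>\<epsilon>. em \<epsilon> j + el \<epsilon> j) \<longlongrightarrow> 0) (at_right 0)" using tendsto_add[OF em0[OF jn] el0[OF jn]] by simp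
    next
      fix i assume "i \<in> off"
      then show "((\<lambda>\<epsilon>. cmod (f \<epsilon> l $ i)) \<longlongrightarrow> 0) (at_right 0)"
        using off_decay[OF s l] by (auto simp: off_def intro!: tendsto_norm_zero)
    qed
    then show ?thesis by (simp add: RHS_def[abs_def])
  qed
  define w where "w \<epsilon> = zl \<epsilon> * zm \<epsilon> / ph s" for \<epsilon>
  have w1: "cmod (w \<epsilon>) = 1" for \<epsilon> using zl zm by (simp add: w_def norm_mult norm_divide norm_phase)
  have big: "eventually (\<lambda>\<epsilon>. 1 \<le> RHS \<epsilon>) (at_right 0)"
    using ev_right
  proof eventually_elim
    case (elim \<epsilon>)
    define B where "B = (\<Sum>i<N. f \<epsilon> m $ i * f \<epsilon> l $ i / d i)"
    have B0: "B = 0" unfolding B_def by (rule B_zero[OF elim lN mN lm])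
    have Bsplit: "B = (\<Sum>j<n. f \<epsilon> m $ (Npre L s + j) * f \<epsilon> l $ (Npre L s + j) / ph s) + (\<Sum>i\<in>off. f \<epsilon> m $ i * f \<epsilon> l $ i / d i)"
    proof -
      have "B = (\<Sum>j<n. f \<epsilon> m $ (Npre L s + j) * f \<epsilon> l $ (Npre L s + j) / d (Npre L s + j)) + (\<Sum>i\<in>off. f \<epsilon> m $ i * f \<epsilon> l $ i / d i)"
        unfolding B_def off_def n_def by (rule sum_split_block[OF s])
      moreover have "(\<Sum>j<n. f \<epsilon> m $ (Npre L s + j) * f \<epsilon> l $ (Npre L s + j) / d (Npre L s + j))
          = (\<Sum>j<n. f \<epsilon> m $ (Npre L s + j) * f \<epsilon> l $ (Npre L s + j) / ph s)"
        using blk_eq[OF s] Npre_in[OF s] n_def by (intro sum.cong) auto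
      ultimately show ?thesis by simp
    qed
    have wsplit: "w \<epsilon> = (\<Sum>j<n. zm \<epsilon> * complex_of_real (r j) * (zl \<epsilon> * complex_of_real (r j)) / ph s)"
    proof -
      have "(\<Sum>j<n. zm \<epsilon> * complex_of_real (r j) * (zl \<epsilon> * complex_of_real (r j)) / ph s)
          = zl \<epsilon> * zm \<epsilon> / ph s * complex_of_real (\<Sum>j<n. r j * r j)"
        by (simp add: sum_distrib_left sum_divide_distrib mult_ac)
      then show ?thesis using on1 n_def by (simp add: w_def)
    qed
    have t1: "cmod (f \<epsilon> m $ (Npre L s + j) * f \<epsilon> l $ (Npre L s + j) / ph s - zm \<epsilon> * complex_of_real (r j) * (zl \<epsilon> * complex_of_real (r j)) / ph s)
        \<le> em \<epsilon> j + el \<epsilon> j" if j: "j < n" for j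
    proof -
      let ?a = "f \<epsilon> m $ (Npre L s + j)" and ?b = "f \<epsilon> l $ (Npre L s + j)"
      let ?x = "zm \<epsilon> * complex_of_real (r j)" and ?y = "zl \<epsilon> * complex_of_real (r j)"
      have "?a * ?b / ph s - ?x * ?y / ph s = ((?a - ?x) * ?b + ?x * (?b - ?y)) / ph s" by (simp add: algebra_simps diff_divide_distrib)
      then have "cmod (?a * ?b / ph s - ?x * ?y / ph s) = cmod ((?a - ?x) * ?b + ?x * (?b - ?y))"
        by (simp add: norm_divide norm_phase)
      also have "\<dots> \<le> cmod (?a - ?x) * cmod ?b + cmod ?x * cmod (?b - ?y)"
        by (rule order_trans[OF norm_triangle_ineq]) (simp add: norm_mult)
      also have "\<dots> \<le> cmod (?a - ?x) * 1 + 1 * cmod (?b - ?y)"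
      proof (intro add_mono mult_left_mono mult_right_mono)
        show "cmod ?b \<le> 1" using fbound[OF elim lN] Npre_lt[OF s] j n_def by auto
        show "cmod ?x \<le> 1" using zm rb[OF j] by (simp add: norm_mult)
      qed auto
      finally show ?thesis by (simp add: em_def el_def)
    qed
    have t2: "cmod (f \<epsilon> m $ i * f \<epsilon> l $ i / d i) \<le> cmod (f \<epsilon> l $ i)" if i: "i \<in> off" for i
    proof -
      have "cmod (f \<epsilon> m $ i) \<le> 1" using fbound[OF elim mN] i by (auto simp: off_def)
      then show ?thesis by (simp add: norm_mult norm_divide norm_phase mult_left_le_one_le)
    qed
    have BW: "B - w \<epsilon> = (\<Sum>j<n. f \<epsilon> m $ (Npre L s + j) * f \<epsilon> l $ (Npre L s + j) / ph s - zm \<epsilon> * complex_of_real (r j) * (zl \<epsilon> * complex_of_real (r j)) / ph s)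
        + (\<Sum>i\<in>off. f \<epsilon> m $ i * f \<epsilon> l $ i / d i)"
      using Bsplit wsplit by (simp add: sum_subtractf)
    have "cmod (B - w \<epsilon>) \<le> (\<Sum>j<n. cmod (f \<epsilon> m $ (Npre L s + j) * f \<epsilon> l $ (Npre L s + j) / ph s - zm \<epsilon> * complex_of_real (r j) * (zl \<epsilon> * complex_of_real (r j)) / ph s))
        + (\<Sum>i\<in>off. cmod (f \<epsilon> m $ i * f \<epsilon> l $ i / d i))"
      unfolding BW by (rule order_trans[OF norm_triangle_ineq add_mono[OF norm_sum norm_sum]])
    also have "\<dots> \<le> RHS \<epsilon>" unfolding RHS_def
      using t1 t2 by (intro add_mono sum_mono) auto
    finally have "cmod (B - w \<epsilon>) \<le> RHS \<epsilon>" .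
    then show ?case using B0 w1 by simp
  qed
  have small: "eventually (\<lambda>\<epsilon>. RHS \<epsilon> < 1) (at_right 0)"
    using order_tendstoD(2)[OF RHS0] by simp
  have "eventually (\<lambda>\<epsilon>. False) (at_right (0::real))"
    using big small by eventually_elim simp
  then show False by (simp add: trivial_limit_at_right_real)
qed

end


definition gvec :: "nat list \<Rightarrow> nat \<Rightarrow> (nat \<Rightarrow> real) \<Rightarrow> complex vec" where
  "gvec L s x = vec (sum_list L) (\<lambda>i. if i \<in> block L s then complex_of_real (x (i - Npre L s)) else 0)"

lemma gvec_carrier: "gvec L s x \<in> carrier_vec (sum_list L)" by (simp add: gvec_def)

lemma gvec_block: "s < length L \<Longrightarrow> j < L ! s \<Longrightarrow> gvec L s x $ (Npre L s + j) = complex_of_real (x j)"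
proof -
  assume a: "s < length L" "j < L ! s"
  have "Npre L s + j \<in> block L s" using a by (simp add: block_eq)
  moreover then have "Npre L s + j < sum_list L" using block_sub[OF a(1)] by auto
  ultimately show ?thesis by (simp add: gvec_def)
qed

lemma gvec_off: "i < sum_list L \<Longrightarrow> i \<notin> block L s \<Longrightarrow> gvec L s x $ i = 0"
  by (simp add: gvec_def)

context setup4
begin

lemma g_eig:
  assumes s: "s < length L" and q: "q < L!s"
    and eig: "\<forall>q<L!s. \<forall>i<L!s. (\<Sum>j<L!s. W $$ (Npre L s + i, Npre L s + j) * r q j) = \<nu> q * r q i"
  shows "(Dmat (int k) \<beta> L * map_mat complex_of_real (WhatL L W)) *\<^sub>v gvec L s (r q)
       = (ph s * complex_of_real (\<nu> q)) \<cdot>\<^sub>v gvec L s (r q)"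
proof (rule eq_vecI)
  let ?g = "gvec L s (r q)"
  let ?M = "map_mat complex_of_real (WhatL L W)"
  have Mc: "?M \<in> carrier_mat N N" by (simp add: WhatL_def)
  show "dim_vec ((Dmat (int k) \<beta> L * ?M) *\<^sub>v ?g) = dim_vec ((ph s * complex_of_real (\<nu> q)) \<cdot>\<^sub>v ?g)"
    by (simp add: Dmat_def gvec_def)
  fix i assume "i < dim_vec ((ph s * complex_of_real (\<nu> q)) \<cdot>\<^sub>v ?g)"
  then have i: "i < N" by (simp add: gvec_def)
  have "((Dmat (int k) \<beta> L * ?M) *\<^sub>v ?g) $ i = d i * (\<Sum>j<N. ?M $$ (i,j) * ?g $ j)"
    using Dmat_mult_apply[OF Mc gvec_carrier i] .
  also have "(\<Sum>j<N. ?M $$ (i,j) * ?g $ j) = (\<Sum>j<L!s. ?M $$ (i, Npre L s + j) * ?g $ (Npre L s + j))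
      + (\<Sum>j\<in>{..<N} - block L s. ?M $$ (i,j) * ?g $ j)"
    by (rule sum_split_block[OF s])
  also have "(\<Sum>j\<in>{..<N} - block L s. ?M $$ (i,j) * ?g $ j) = 0"
    by (intro sum.neutral) (auto simp: gvec_off)
  also have "(\<Sum>j<L!s. ?M $$ (i, Npre L s + j) * ?g $ (Npre L s + j))
      = (\<Sum>j<L!s. (if i \<in> block L s then complex_of_real (W $$ (i, Npre L s + j)) else 0) * complex_of_real (r q j))"
  proof (intro sum.cong refl)
    fix j assume j: "j \<in> {..<L!s}"
    have jb: "Npre L s + j \<in> block L s" and jN: "Npre L s + j < N" using Npre_in[OF s] Npre_lt[OF s] j by auto
    have "(\<exists>s'<length L. i \<in> block L s' \<and> Npre L s + j \<in> block L s') \<longleftrightarrow> i \<in> block L s"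
      using jb s block_unique by blast
    then show "?M $$ (i, Npre L s + j) * ?g $ (Npre L s + j) = (if i \<in> block L s then complex_of_real (W $$ (i, Npre L s + j)) else 0) * complex_of_real (r q j)"
      using i jN gvec_block[OF s] j by (simp add: WhatL_def)
  qed
  finally have lhs: "((Dmat (int k) \<beta> L * ?M) *\<^sub>v ?g) $ i
     = d i * (\<Sum>j<L!s. (if i \<in> block L s then complex_of_real (W $$ (i, Npre L s + j)) else 0) * complex_of_real (r q j))"
    by simp
  show "((Dmat (int k) \<beta> L * ?M) *\<^sub>v ?g) $ i = ((ph s * complex_of_real (\<nu> q)) \<cdot>\<^sub>v ?g) $ i"
  proof (cases "i \<in> block L s")
    case True
    define i' where "i' = i - Npre L s"
    have i': "i' < L!s" "i = Npre L s + i'" using True s by (auto simp: block_eq i'_def)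
    have di: "d i = ph s" using blk_eq[OF s True] by simp
    have "(\<Sum>j<L!s. (if i \<in> block L s then complex_of_real (W $$ (i, Npre L s + j)) else 0) * complex_of_real (r q j))
        = complex_of_real (\<Sum>j<L!s. W $$ (Npre L s + i', Npre L s + j) * r q j)"
      using True i' by simp
    also have "\<dots> = complex_of_real (\<nu> q * r q i')" using eig q i' by simp
    finally show ?thesis using lhs di i True gvec_block[OF s i'(1)] i' by (simp add: gvec_def)
  next
    case False
    have "((ph s * complex_of_real (\<nu> q)) \<cdot>\<^sub>v ?g) $ i = 0" using i False by (simp add: gvec_def)
    then show ?thesis using lhs i False by simp
  qed
qed

lemma g_inner:
  assumes s: "s < length L" and t: "t < length L"
  shows "gvec L s x \<bullet>c gvec L t y = (if s = t then complex_of_real (\<Sum>j<L!s. x j * y j) else 0)"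
proof -
  have "gvec L s x \<bullet>c gvec L t y = (\<Sum>i<N. gvec L s x $ i * cnj (gvec L t y $ i))"
    by (simp add: scalar_prod_def gvec_def atLeast0LessThan)
  also have "\<dots> = (\<Sum>j<L!s. gvec L s x $ (Npre L s + j) * cnj (gvec L t y $ (Npre L s + j)))
      + (\<Sum>i\<in>{..<N} - block L s. gvec L s x $ i * cnj (gvec L t y $ i))"
    by (rule sum_split_block[OF s])
  also have "(\<Sum>i\<in>{..<N} - block L s. gvec L s x $ i * cnj (gvec L t y $ i)) = 0"
    by (intro sum.neutral) (auto simp: gvec_off)
  finally have e: "gvec L s x \<bullet>c gvec L t y = (\<Sum>j<L!s. gvec L s x $ (Npre L s + j) * cnj (gvec L t y $ (Npre L s + j)))"
    by simp
  show ?thesis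
  proof (cases "s = t")
    case True
    then show ?thesis using e gvec_block[OF s] by simp
  next
    case False
    have "gvec L t y $ (Npre L s + j) = 0" if "j < L!s" for j
    proof -
      have "Npre L s + j \<in> block L s" "Npre L s + j < N" using Npre_in[OF s] Npre_lt[OF s] that by auto
      then have "Npre L s + j \<notin> block L t" using False block_unique by blast
      then show ?thesis using \<open>Npre L s + j < N\<close> by (simp add: gvec_off)
    qed
    then show ?thesis using e False by simp
  qed
qed

lemma g_vnorm:
  assumes s: "s < length L" and n1: "(\<Sum>j<L!s. x j * x j) = 1"
  shows "vnorm (gvec L s x) = 1"
proof -
  have "(\<Sum>i<N. (cmod (gvec L s x $ i))\<^sup>2) = (\<Sum>j<L!s. (cmod (gvec L s x $ (Npre L s + j)))\<^sup>2)
     + (\<Sum>i\<in>{..<N} - block L s. (cmod (gvec L s x $ i))\<^sup>2)"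
    by (rule sum_split_block[OF s])
  also have "(\<Sum>i\<in>{..<N} - block L s. (cmod (gvec L s x $ i))\<^sup>2) = 0"
    by (intro sum.neutral) (auto simp: gvec_off)
  also have "(\<Sum>j<L!s. (cmod (gvec L s x $ (Npre L s + j)))\<^sup>2) = (\<Sum>j<L!s. x j * x j)"
    using gvec_block[OF s] by (intro sum.cong) (auto simp: power2_eq_square)
  finally show ?thesis using n1 by (simp add: vnorm_def gvec_def)
qed

end


lemma vnorm_nonneg: "0 \<le> vnorm v" by (simp add: vnorm_def sum_nonneg)

lemma cp_le:
  assumes "\<theta> \<in> {0..<2*pi}"
  shows "cp_dist v w \<le> vnorm (complex_of_real (1 / vnorm v) \<cdot>\<^sub>v v
                      - (exp (\<i> * of_real \<theta>) * complex_of_real (1 / vnorm w)) \<cdot>\<^sub>v w)"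
  unfolding cp_dist_def
  by (rule cInf_lower) (use assms vnorm_nonneg in \<open>auto intro!: bdd_belowI[of _ 0]\<close>)

lemma cp_nonneg: "0 \<le> cp_dist v w"
  unfolding cp_dist_def
  by (rule cInf_greatest) (use vnorm_nonneg pi_gt_zero in auto)

context setup4
begin

lemma cp_conv:
  assumes s: "s < length L" and l: "l \<in> block L s" and n1: "(\<Sum>j<L!s. x j * x j) = 1"
    and z: "\<forall>\<epsilon>. cmod (z \<epsilon>) = 1"
    and c: "((\<lambda>\<epsilon>. \<Sum>j<L!s. (cmod (f \<epsilon> l $ (Npre L s + j) - z \<epsilon> * complex_of_real (x j)))\<^sup>2) \<longlongrightarrow> 0) (at_right 0)"
  shows "((\<lambda>\<epsilon>. cp_dist (f \<epsilon> l) (gvec L s x)) \<longlongrightarrow> 0) (at_right 0)"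
proof -
  define off where "off = {..<N} - block L s"
  have lN: "l < N" using block_sub[OF s] l by auto
  define RHS where "RHS \<epsilon> = sqrt ((\<Sum>j<L!s. (cmod (f \<epsilon> l $ (Npre L s + j) - z \<epsilon> * complex_of_real (x j)))\<^sup>2)
      + (\<Sum>i\<in>off. (cmod (f \<epsilon> l $ i))\<^sup>2))" for \<epsilon>
  have R0: "(RHS \<longlongrightarrow> 0) (at_right 0)"
  proof -
    have "((\<lambda>\<epsilon>. (\<Sum>i\<in>off. (cmod (f \<epsilon> l $ i))\<^sup>2)) \<longlongrightarrow> 0) (at_right 0)"
    proof (rule tendsto_null_sum)
      fix i assume "i \<in> off"
      then have "((\<lambda>\<epsilon>. f \<epsilon> l $ i) \<longlongrightarrow> 0) (at_right 0)" using off_decay[OF s l] by (auto simp: off_def)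
      from tendsto_power[OF tendsto_norm_zero[OF this], of 2]
      show "((\<lambda>\<epsilon>. (cmod (f \<epsilon> l $ i))\<^sup>2) \<longlongrightarrow> 0) (at_right 0)" by simp
    qed
    from tendsto_real_sqrt[OF tendsto_add[OF c this]] show ?thesis by (simp add: RHS_def[abs_def])
  qed
  have gn: "vnorm (gvec L s x) = 1" by (rule g_vnorm[OF s n1])
  have ev: "eventually (\<lambda>\<epsilon>. cp_dist (f \<epsilon> l) (gvec L s x) \<le> RHS \<epsilon>) (at_right 0)"
    using ev_right
  proof eventually_elim
    case (elim \<epsilon>)
    have fc: "f \<epsilon> l \<in> carrier_vec N" and fn: "vnorm (f \<epsilon> l) = 1" using eigvec elim lN by auto
    obtain \<theta> where \<theta>: "\<theta> \<in> {0..<2*pi}" "exp (\<i> * complex_of_real \<theta>) = z \<epsilon>" using unit_exp z by blast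
    have "cp_dist (f \<epsilon> l) (gvec L s x) \<le> vnorm (f \<epsilon> l - z \<epsilon> \<cdot>\<^sub>v gvec L s x)"
      using cp_le[OF \<theta>(1), of "f \<epsilon> l" "gvec L s x"] fn gn \<theta>(2) by simp
    also have "vnorm (f \<epsilon> l - z \<epsilon> \<cdot>\<^sub>v gvec L s x) = sqrt (\<Sum>i<N. (cmod (f \<epsilon> l $ i - z \<epsilon> * gvec L s x $ i))\<^sup>2)"
      using fc by (simp add: vnorm_def gvec_def)
    also have "(\<Sum>i<N. (cmod (f \<epsilon> l $ i - z \<epsilon> * gvec L s x $ i))\<^sup>2)
        = (\<Sum>j<L!s. (cmod (f \<epsilon> l $ (Npre L s + j) - z \<epsilon> * gvec L s x $ (Npre L s + j)))\<^sup>2)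
          + (\<Sum>i\<in>off. (cmod (f \<epsilon> l $ i - z \<epsilon> * gvec L s x $ i))\<^sup>2)"
      unfolding off_def by (rule sum_split_block[OF s])
    also have "\<dots> = (\<Sum>j<L!s. (cmod (f \<epsilon> l $ (Npre L s + j) - z \<epsilon> * complex_of_real (x j)))\<^sup>2)
          + (\<Sum>i\<in>off. (cmod (f \<epsilon> l $ i))\<^sup>2)"
      using gvec_block[OF s] gvec_off by (intro arg_cong2[where f = "(+)"] sum.cong) (auto simp: off_def)
    finally show ?case by (simp add: RHS_def)
  qed
  show ?thesis
    by (rule tendsto_sandwich[of "\<lambda>_. 0" _ _ RHS, OF _ ev]) (auto simp: cp_nonneg R0)
qed

end


context setup4
begin

lemma main:
  "\<exists>g :: nat \<Rightarrow> complex vec. \<exists>lh :: nat \<Rightarrow> complex.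
     (\<forall>l < N. g l \<in> carrier_vec N \<and> (Dmat (int k) \<beta> L * map_mat complex_of_real (WhatL L W)) *\<^sub>v g l = lh l \<cdot>\<^sub>v g l) \<and>
     (\<forall>l < N. \<forall>m < N. g l \<bullet>c g m = (if l = m then 1 else 0)) \<and>
     (\<forall>l < N. ((\<lambda>\<epsilon>. cp_dist (f \<epsilon> l) (g l)) \<longlongrightarrow> 0) (at_right 0)) \<and>
     (\<forall>s < length L. \<forall>l \<in> block L s.
        (\<lambda>\<epsilon>. lam \<epsilon> l - phase (int k) \<beta> s - complex_of_real \<epsilon> * lh l)
          \<in> o[at_right 0](\<lambda>\<epsilon>. complex_of_real \<epsilon>) \<and>
        (lh l \<noteq> 0 \<longrightarrow> (\<exists>m::int. Arg (lh l) = Arg (phase (int k) \<beta> s) + pi + 2 * pi * of_int m)))"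
proof -
  have "\<forall>s. \<exists>p. s < length L \<longrightarrow> spec_ok (L!s) (\<lambda>i j. W $$ (Npre L s + i, Npre L s + j)) (fst p) (snd p) \<and> (\<forall>q<L!s. fst p q \<le> 0)"
    using block_spec by fastforce
  from choice[OF this] obtain SP where SP: "\<And>s. s < length L \<Longrightarrow> spec_ok (L!s) (\<lambda>i j. W $$ (Npre L s + i, Npre L s + j)) (fst (SP s)) (snd (SP s)) \<and> (\<forall>q<L!s. fst (SP s) q \<le> 0)"
    by blast
  define Nu where "Nu s = fst (SP s)" for s
  define Rr where "Rr s = snd (SP s)" for s
  have spec: "spec_ok (L!s) (\<lambda>i j. W $$ (Npre L s + i, Npre L s + j)) (Nu s) (Rr s)"
    and neg: "\<forall>q<L!s. Nu s q \<le> 0" if "s < length L" for s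
    using SP[OF that] by (auto simp: Nu_def Rr_def)
  have blkl: "blk L l < length L" "l \<in> block L (blk L l)" if "l < N" for l using blk[OF that] by auto
  have "\<forall>l. \<exists>p. l < N \<longrightarrow> (fst p < L!(blk L l) \<and>
      ((\<lambda>\<epsilon>. (lam \<epsilon> l - ph (blk L l)) / (complex_of_real \<epsilon> * ph (blk L l))) \<longlongrightarrow> complex_of_real (Nu (blk L l) (fst p))) (at_right 0) \<and>
      (\<forall>\<epsilon>. cmod (snd p \<epsilon>) = 1) \<and>
      ((\<lambda>\<epsilon>. \<Sum>j<L!(blk L l). (cmod (f \<epsilon> l $ (Npre L (blk L l) + j) - snd p \<epsilon> * complex_of_real (Rr (blk L l) (fst p) j)))\<^sup>2) \<longlongrightarrow> 0) (at_right 0))"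
  proof
    fix l
    show "\<exists>p. l < N \<longrightarrow> (fst p < L!(blk L l) \<and>
      ((\<lambda>\<epsilon>. (lam \<epsilon> l - ph (blk L l)) / (complex_of_real \<epsilon> * ph (blk L l))) \<longlongrightarrow> complex_of_real (Nu (blk L l) (fst p))) (at_right 0) \<and>
      (\<forall>\<epsilon>. cmod (snd p \<epsilon>) = 1) \<and>
      ((\<lambda>\<epsilon>. \<Sum>j<L!(blk L l). (cmod (f \<epsilon> l $ (Npre L (blk L l) + j) - snd p \<epsilon> * complex_of_real (Rr (blk L l) (fst p) j)))\<^sup>2) \<longlongrightarrow> 0) (at_right 0))"
    proof (cases "l < N")
      case True
      from per_l[OF blkl[OF True] spec[OF blkl(1)[OF True]]]
      obtain q z where "q < L!(blk L l)"
        "((\<lambda>\<epsilon>. (lam \<epsilon> l - ph (blk L l)) / (complex_of_real \<epsilon> * ph (blk L l))) \<longlongrightarrow> complex_of_real (Nu (blk L l) q)) (at_right 0)"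
        "\<forall>\<epsilon>. cmod (z \<epsilon>) = 1"
        "((\<lambda>\<epsilon>. \<Sum>j<L!(blk L l). (cmod (f \<epsilon> l $ (Npre L (blk L l) + j) - z \<epsilon> * complex_of_real (Rr (blk L l) q j)))\<^sup>2) \<longlongrightarrow> 0) (at_right 0)"
        by blast
      then show ?thesis by (intro exI[of _ "(q,z)"]) simp
    qed simp
  qed
  from choice[OF this] obtain QZ where QZ: "\<And>l. l < N \<Longrightarrow> fst (QZ l) < L!(blk L l) \<and>
      ((\<lambda>\<epsilon>. (lam \<epsilon> l - ph (blk L l)) / (complex_of_real \<epsilon> * ph (blk L l))) \<longlongrightarrow> complex_of_real (Nu (blk L l) (fst (QZ l)))) (at_right 0) \<and>
      (\<forall>\<epsilon>. cmod (snd (QZ l) \<epsilon>) = 1) \<and>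
      ((\<lambda>\<epsilon>. \<Sum>j<L!(blk L l). (cmod (f \<epsilon> l $ (Npre L (blk L l) + j) - snd (QZ l) \<epsilon> * complex_of_real (Rr (blk L l) (fst (QZ l)) j)))\<^sup>2) \<longlongrightarrow> 0) (at_right 0)"
    by blast
  define Q where "Q l = fst (QZ l)" for l
  define Z where "Z l = snd (QZ l)" for l
  have Qlt: "Q l < L!(blk L l)"
    and Qlim: "((\<lambda>\<epsilon>. (lam \<epsilon> l - ph (blk L l)) / (complex_of_real \<epsilon> * ph (blk L l))) \<longlongrightarrow> complex_of_real (Nu (blk L l) (Q l))) (at_right 0)"
    and Zn: "\<forall>\<epsilon>. cmod (Z l \<epsilon>) = 1"
    and Zc: "((\<lambda>\<epsilon>. \<Sum>j<L!(blk L l). (cmod (f \<epsilon> l $ (Npre L (blk L l) + j) - Z l \<epsilon> * complex_of_real (Rr (blk L l) (Q l) j)))\<^sup>2) \<longlongrightarrow> 0) (at_right 0)"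
    if "l < N" for l
    using QZ[OF that] by (auto simp: Q_def Z_def)
  have on: "(\<Sum>j<L!s. Rr s q j * Rr s p j) = (if q = p then 1 else 0)" if "s < length L" "q < L!s" "p < L!s" for s q p
    using spec[OF that(1)] that by (auto simp: spec_ok_def)
  have injQ: "Q l \<noteq> Q m" if "l < N" "m < N" "blk L l = blk L m" "l \<noteq> m" for l m
  proof
    assume eq: "Q l = Q m"
    define s where "s = blk L l"
    have s: "s < length L" "l \<in> block L s" "m \<in> block L s" using blkl[OF that(1)] blkl[OF that(2)] that(3) by (auto simp: s_def)
    show False
    proof (rule no_collision[OF s(1) s(2) s(3) that(4)])
      show "(\<Sum>j<L!s. Rr s (Q l) j * Rr s (Q l) j) = 1" using on[OF s(1), of "Q l" "Q l"] Qlt[OF that(1)] s_def by simp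
      show "\<forall>\<epsilon>. cmod (Z l \<epsilon>) = 1" using Zn that by blast
      show "\<forall>\<epsilon>. cmod (Z m \<epsilon>) = 1" using Zn that by blast
      show "((\<lambda>\<epsilon>. \<Sum>j<L!s. (cmod (f \<epsilon> l $ (Npre L s + j) - Z l \<epsilon> * complex_of_real (Rr s (Q l) j)))\<^sup>2) \<longlongrightarrow> 0) (at_right 0)"
        using Zc[OF that(1)] s_def by simp
      show "((\<lambda>\<epsilon>. \<Sum>j<L!s. (cmod (f \<epsilon> m $ (Npre L s + j) - Z m \<epsilon> * complex_of_real (Rr s (Q l) j)))\<^sup>2) \<longlongrightarrow> 0) (at_right 0)"
        using Zc[OF that(2)] s_def that(3) eq by simp
    qed
  qed
  define g where "g l = gvec L (blk L l) (Rr (blk L l) (Q l))" for l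
  define lh where "lh l = ph (blk L l) * complex_of_real (Nu (blk L l) (Q l))" for l
  have P1: "\<forall>l < N. g l \<in> carrier_vec N \<and> (Dmat (int k) \<beta> L * map_mat complex_of_real (WhatL L W)) *\<^sub>v g l = lh l \<cdot>\<^sub>v g l"
  proof (intro allI impI conjI)
    fix l assume l: "l < N"
    show "g l \<in> carrier_vec N" by (simp add: g_def gvec_carrier)
    have eig: "\<forall>q<L!(blk L l). \<forall>i<L!(blk L l). (\<Sum>j<L!(blk L l). W $$ (Npre L (blk L l) + i, Npre L (blk L l) + j) * Rr (blk L l) q j) = Nu (blk L l) q * Rr (blk L l) q i"
      using spec[OF blkl(1)[OF l]] by (simp add: spec_ok_def)
    show "(Dmat (int k) \<beta> L * map_mat complex_of_real (WhatL L W)) *\<^sub>v g l = lh l \<cdot>\<^sub>v g l"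
      unfolding g_def lh_def by (rule g_eig[OF blkl(1)[OF l] Qlt[OF l] eig])
  qed
  have P2: "\<forall>l < N. \<forall>m < N. g l \<bullet>c g m = (if l = m then 1 else 0)"
  proof (intro allI impI)
    fix l m assume l: "l < N" and m: "m < N"
    show "g l \<bullet>c g m = (if l = m then 1 else 0)"
    proof (cases "blk L l = blk L m")
      case True
      have "g l \<bullet>c g m = complex_of_real (\<Sum>j<L!(blk L l). Rr (blk L l) (Q l) j * Rr (blk L l) (Q m) j)"
        using g_inner[OF blkl(1)[OF l] blkl(1)[OF m]] True by (simp add: g_def)
      also have "\<dots> = (if Q l = Q m then 1 else 0)"
        using on[OF blkl(1)[OF l] Qlt[OF l], of "Q m"] Qlt[OF m] True by simp
      finally show ?thesis using injQ[OF l m True] by auto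
    next
      case False
      then have "l \<noteq> m" by auto
      then show ?thesis using g_inner[OF blkl(1)[OF l] blkl(1)[OF m]] False by (simp add: g_def)
    qed
  qed
  have P3: "\<forall>l < N. ((\<lambda>\<epsilon>. cp_dist (f \<epsilon> l) (g l)) \<longlongrightarrow> 0) (at_right 0)"
  proof (intro allI impI)
    fix l assume l: "l < N"
    show "((\<lambda>\<epsilon>. cp_dist (f \<epsilon> l) (g l)) \<longlongrightarrow> 0) (at_right 0)"
      unfolding g_def
    proof (rule cp_conv[OF blkl[OF l]])
      show "(\<Sum>j<L!(blk L l). Rr (blk L l) (Q l) j * Rr (blk L l) (Q l) j) = 1"
        using on[OF blkl(1)[OF l] Qlt[OF l] Qlt[OF l]] by simp
      show "\<forall>\<epsilon>. cmod (Z l \<epsilon>) = 1" using Zn[OF l] .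
      show "((\<lambda>\<epsilon>. \<Sum>j<L!(blk L l). (cmod (f \<epsilon> l $ (Npre L (blk L l) + j) - Z l \<epsilon> * complex_of_real (Rr (blk L l) (Q l) j)))\<^sup>2) \<longlongrightarrow> 0) (at_right 0)"
        using Zc[OF l] .
    qed
  qed
  have P4: "\<forall>s < length L. \<forall>l \<in> block L s.
        (\<lambda>\<epsilon>. lam \<epsilon> l - phase (int k) \<beta> s - complex_of_real \<epsilon> * lh l)
          \<in> o[at_right 0](\<lambda>\<epsilon>. complex_of_real \<epsilon>) \<and>
        (lh l \<noteq> 0 \<longrightarrow> (\<exists>m::int. Arg (lh l) = Arg (phase (int k) \<beta> s) + pi + 2 * pi * of_int m))"
  proof (intro allI ballI impI conjI)
    fix s l assume s: "s < length L" and l: "l \<in> block L s"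
    have lN: "l < N" using block_sub[OF s] l by auto
    have bs: "blk L l = s" using blk_eq[OF s l] .
    define \<nu> where "\<nu> = Nu s (Q l)"
    have lim\<kappa>: "((\<lambda>\<epsilon>. (lam \<epsilon> l - ph s) / (complex_of_real \<epsilon> * ph s)) \<longlongrightarrow> complex_of_real \<nu>) (at_right 0)"
      using Qlim[OF lN] bs by (simp add: \<nu>_def)
    have lh: "lh l = ph s * complex_of_real \<nu>" by (simp add: lh_def bs \<nu>_def)
    show "(\<lambda>\<epsilon>. lam \<epsilon> l - phase (int k) \<beta> s - complex_of_real \<epsilon> * lh l) \<in> o[at_right 0](\<lambda>\<epsilon>. complex_of_real \<epsilon>)"
    proof (rule landau_o.smallI)
      fix c :: real assume c: "c > 0"
      have e1: "eventually (\<lambda>\<epsilon>. dist ((lam \<epsilon> l - ph s) / (complex_of_real \<epsilon> * ph s)) (complex_of_real \<nu>) < c) (at_right 0)"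
        using lim\<kappa> c unfolding tendsto_iff by blast
      show "eventually (\<lambda>\<epsilon>. cmod (lam \<epsilon> l - phase (int k) \<beta> s - complex_of_real \<epsilon> * lh l) \<le> c * cmod (complex_of_real \<epsilon>)) (at_right 0)"
        using e1 ev_right
      proof eventually_elim
        case (elim \<epsilon>)
        have nz: "complex_of_real \<epsilon> * ph s \<noteq> 0" using elim phase_nz by auto
        have "lam \<epsilon> l - ph s - complex_of_real \<epsilon> * lh l
            = (complex_of_real \<epsilon> * ph s) * ((lam \<epsilon> l - ph s) / (complex_of_real \<epsilon> * ph s) - complex_of_real \<nu>)"
          using nz by (simp add: lh field_simps)
        then have "cmod (lam \<epsilon> l - ph s - complex_of_real \<epsilon> * lh l)
            = \<epsilon> * cmod ((lam \<epsilon> l - ph s) / (complex_of_real \<epsilon> * ph s) - complex_of_real \<nu>)"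
          using elim by (simp add: norm_mult norm_phase)
        also have "\<dots> \<le> \<epsilon> * c" using elim by (intro mult_left_mono) (auto simp: dist_norm)
        finally show ?case using elim by (simp add: mult.commute)
      qed
    qed
    show "\<exists>m::int. Arg (lh l) = Arg (phase (int k) \<beta> s) + pi + 2 * pi * of_int m" if "lh l \<noteq> 0"
    proof -
      have "\<nu> \<le> 0" using neg[OF s] Qlt[OF lN] bs by (simp add: \<nu>_def)
      moreover have "\<nu> \<noteq> 0" using that lh by auto
      ultimately have "\<nu> < 0" by simp
      then show ?thesis using arg_neg[OF phase_nz] lh by simp
    qed
  qed
  show ?thesis using P1 P2 P3 P4 by blast
qed

end


theorem theorem4p2:
  fixes L :: "nat list" and W :: "real mat" and k :: nat and \<beta> :: "nat \<Rightarrow> real"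
    and \<gamma> :: real
    and f :: "real \<Rightarrow> nat \<Rightarrow> complex vec" and lam :: "real \<Rightarrow> nat \<Rightarrow> complex"
  defines "N \<equiv> sum_list L" and "S \<equiv> length L"
  defines "D \<equiv> Dmat (int k) \<beta> L"
  defines "P \<equiv> (\<lambda>\<epsilon>::real. D * (1\<^sub>m N + complex_of_real \<epsilon> \<cdot>\<^sub>m map_mat complex_of_real W))"
  defines "Phat \<equiv> D * map_mat complex_of_real (WhatL L W)"
  assumes L: "bandwidth_vector L" and S: "1 < S" "S \<le> N"
    and W: "admissible L W"
    and k: "k > 0"
    and \<beta>: "\<beta> \<in> Gamma S"
    and \<gamma>: "\<gamma> > 0"
    and distinct_ev: "\<forall>\<epsilon> \<in> {0<..<\<gamma>}. card {\<mu>. eigenvalue (P \<epsilon>) \<mu>} = N"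
    and eigvec: "\<forall>\<epsilon> \<in> {0<..<\<gamma>}. \<forall>l < N. f \<epsilon> l \<in> carrier_vec N \<and> vnorm (f \<epsilon> l) = 1
                   \<and> P \<epsilon> *\<^sub>v f \<epsilon> l = lam \<epsilon> l \<cdot>\<^sub>v f \<epsilon> l"
    and basis: "\<forall>\<epsilon> \<in> {0<..<\<gamma>}. \<forall>v \<in> carrier_vec N. \<exists>c :: nat \<Rightarrow> complex.
                   v = vec N (\<lambda>i. \<Sum>l < N. c l * (f \<epsilon> l $ i))"
    and cont: "\<forall>l < N. continuous_on {0<..<\<gamma>} (\<lambda>\<epsilon>. lam \<epsilon> l)"
    and lim: "\<forall>s < S. \<forall>l \<in> block L s. ((\<lambda>\<epsilon>. lam \<epsilon> l) \<longlongrightarrow> phase (int k) \<beta> s) (at_right 0)"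
  shows "\<exists>g :: nat \<Rightarrow> complex vec. \<exists>lh :: nat \<Rightarrow> complex.
           (\<forall>l < N. g l \<in> carrier_vec N \<and> Phat *\<^sub>v g l = lh l \<cdot>\<^sub>v g l) \<and>
           (\<forall>l < N. \<forall>m < N. g l \<bullet>c g m = (if l = m then 1 else 0)) \<and>
           (\<forall>l < N. ((\<lambda>\<epsilon>. cp_dist (f \<epsilon> l) (g l)) \<longlongrightarrow> 0) (at_right 0)) \<and>
           (\<forall>s < S. \<forall>l \<in> block L s.
              (\<lambda>\<epsilon>. lam \<epsilon> l - phase (int k) \<beta> s - complex_of_real \<epsilon> * lh l)
                \<in> o[at_right 0](\<lambda>\<epsilon>. complex_of_real \<epsilon>) \<and>
              (lh l \<noteq> 0 \<longrightarrow> (\<exists>m::int. Arg (lh l) = Arg (phase (int k) \<beta> s) + pi + 2 * pi * of_int m)))"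
proof -
  interpret T: setup4 L W k \<beta> \<gamma> f lam
  proof (unfold_locales)
  qed (use assms in \<open>simp_all only: N_def S_def P_def D_def\<close>)
  show ?thesis using T.main unfolding N_def S_def Phat_def D_def by simp
qed

end
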